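(* Let $X\in\mathbb{R}^{m\times n}$ with $\operatorname{rank}(X)=r\le d$. Let $0<p\le 1$, $p_1>0$ and $p_2>0$ satisfy $1/p_1+1/p_2=1/p$. Then the minimum below is attained and \[ \|X\|_{S_p}=\min_{U\in\mathbb{R}^{m\times d},\,V\in\mathbb{R}^{n\times d}:\,X=UV^{T}}\|U\|_{S_{p_1}}\|V\|_{S_{p_2}}. \]
   Context: For $0<q<\infty$ and a real matrix $Y$ with singular values $\sigma_1(Y),\dots,\sigma_k(Y)$ ($k$ the smaller dimension of $Y$), the Schatten-$q$ (quasi-)norm is $\|Y\|_{S_q}=\left(\sum_{i=1}^{k}\sigma_i(Y)^q\right)^{1/q}$. *)

theory Defs
  imports "Jordan_Normal_Form.DL_Rank" "Jordan_Normal_Form.Char_Poly"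
    "HOL-Computational_Algebra.Polynomial"
begin

text \<open>Singular values of a real matrix Y are the square roots of the eigenvalues
  (with algebraic multiplicity) of Y^T Y.  The eigenvalues of the symmetric matrix
  Y^T Y are real, so they are exactly the multiset of real roots of its
  characteristic polynomial.  Extra zero eigenvalues (when Y has more columns than
  rows) contribute 0 to the sum since q > 0.\<close>

definition sq_singular_values :: "real mat \<Rightarrow> real multiset" where
  "sq_singular_values Y = proots (char_poly (transpose_mat Y * Y))"

definition schatten :: "real \<Rightarrow> real mat \<Rightarrow> real" where
  "schatten q Y =
     (\<Sum>\<^sub># (image_mset (\<lambda>t. (sqrt t) powr q) (sq_singular_values Y))) powr (1 / q)"

end

theory Submission
  imports Defs "HOL-Computational_Algebra.Fundamental_Theorem_Algebra"
    "Jordan_Normal_Form.Schur_Decomposition" "HOL-Analysis.Convex"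
begin

no_notation inner (infix \<open>\<bullet>\<close> 70)

definition dg :: "nat \<Rightarrow> (nat \<Rightarrow> real) \<Rightarrow> real mat" where
  "dg k f = mat k k (\<lambda>(i,j). if i = j then f i else 0)"

lemma dg_carrier[simp]: "dg k f \<in> carrier_mat k k"
  by (simp add: dg_def)
lemma dg_dims[simp]: "dim_row (dg k f) = k" "dim_col (dg k f) = k"
  by (simp_all add: dg_def)
lemma dg_index[simp]: "i < k \<Longrightarrow> j < k \<Longrightarrow> dg k f $$ (i,j) = (if i = j then f i else 0)"
  by (simp add: dg_def)

lemma char_poly_dg: "char_poly (dg k f) = (\<Prod> a \<leftarrow> map f [0..<k]. [:- a, 1:])"
proof -
  have ut: "upper_triangular (dg k f)" by (auto simp: upper_triangular_def)
  have "diag_mat (dg k f) = map f [0..<k]" by (auto simp: diag_mat_def)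
  with char_poly_upper_triangular[OF dg_carrier ut] show ?thesis by simp
qed

lemma proots_dg: "proots (char_poly (dg k f)) = mset (map f [0..<k])"
proof -
  have "proots (\<Prod> a \<leftarrow> map f [0..<k]. [:- a, 1:]) = mset (map f [0..<k])"
  proof (induction k)
    case (Suc k)
    have nz: "(\<Prod> a \<leftarrow> map f [0..<k]. [:- a, 1:]) \<noteq> 0" by (auto simp: prod_list_zero_iff)
    define P where "P = (\<Prod> a \<leftarrow> map f [0..<k]. [:- a, 1:])"
    define L where "L = [:- f k, 1:]"
    have e: "(\<Prod> a \<leftarrow> map f [0..<Suc k]. [:- a, 1:]) = P * L"
      by (simp add: P_def L_def)
    have L0: "L \<noteq> 0" by (simp add: L_def)
    have pl: "proots L = {#f k#}" using proots_linear_factor[of "- f k"] by (simp add: L_def)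
    have "proots (P * L) = proots P + proots L" by (rule proots_mult) (use nz L0 P_def in auto)
    then show ?case unfolding e using Suc pl P_def by simp
  qed simp
  thus ?thesis by (simp add: char_poly_dg)
qed

definition orth :: "nat \<Rightarrow> real mat \<Rightarrow> bool" where
  "orth k Q \<longleftrightarrow> Q \<in> carrier_mat k k \<and> transpose_mat Q * Q = 1\<^sub>m k"

lemma orth_right: assumes "orth k Q" shows "Q * transpose_mat Q = 1\<^sub>m k"
  using assms mat_mult_left_right_inverse[of "transpose_mat Q" k Q] unfolding orth_def by auto

lemma sq_sv_spec:
  assumes Y: "Y \<in> carrier_mat a k" and Q: "orth k Q"
    and eq: "transpose_mat Y * Y = Q * dg k f * transpose_mat Q"
  shows "sq_singular_values Y = mset (map f [0..<k])"
proof -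
  have Qc: "Q \<in> carrier_mat k k" using Q by (auto simp: orth_def)
  have "similar_mat_wit (transpose_mat Y * Y) (dg k f) Q (transpose_mat Q)"
    unfolding similar_mat_wit_def Let_def using Y Qc orth_right[OF Q] Q eq
    by (auto simp: orth_def)
  hence "similar_mat (transpose_mat Y * Y) (dg k f)" unfolding similar_mat_def by blast
  from char_poly_similar[OF this] show ?thesis
    unfolding sq_singular_values_def proots_dg[symmetric] by simp
qed

lemma schatten_spec:
  assumes Y: "Y \<in> carrier_mat a k" and Q: "orth k Q"
    and eq: "transpose_mat Y * Y = Q * dg k f * transpose_mat Q"
  shows "schatten q Y = (\<Sum>i<k. sqrt (f i) powr q) powr (1/q)"
proof -
  have "(\<Sum>\<^sub># (image_mset (\<lambda>t. (sqrt t) powr q) (mset (map f [0..<k])))) = (\<Sum>i<k. sqrt (f i) powr q)"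
    by (induction k) auto
  thus ?thesis unfolding schatten_def sq_sv_spec[OF assms] by simp
qed




lemma real_eigenvalue_exists:
  fixes A :: "real mat"
  assumes A: "A \<in> carrier_mat n n" and sym: "transpose_mat A = A" and n: "0 < n"
  shows "\<exists>\<mu>. eigenvalue A \<mu>"
proof -
  define Ac where "Ac = map_mat complex_of_real A"
  have Ac: "Ac \<in> carrier_mat n n" using A by (simp add: Ac_def)
  have cp: "char_poly Ac = map_poly complex_of_real (char_poly A)"
    unfolding Ac_def by (rule of_real_hom.char_poly_hom[OF A])
  have "degree (char_poly Ac) = n" using degree_monic_char_poly[OF Ac] by simp
  hence "\<not> constant (poly (char_poly Ac))" using n constant_degree[of "char_poly Ac"] by simp
  then obtain z where z: "poly (char_poly Ac) z = 0" using fundamental_theorem_of_algebra by blast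
  hence "eigenvalue Ac z" using eigenvalue_root_char_poly[OF Ac] by simp
  then obtain v where ev: "eigenvector Ac v z" unfolding eigenvalue_def by blast
  hence v: "v \<in> carrier_vec n" and v0: "v \<noteq> 0\<^sub>v n" and Av: "Ac *\<^sub>v v = z \<cdot>\<^sub>v v"
    using Ac unfolding eigenvector_def by auto
  define s where "s = (\<Sum>i<n. \<Sum>j<n. cnj (v$i) * Ac$$(i,j) * v$j)"
  have "s = (\<Sum>i<n. cnj (v$i) * (Ac *\<^sub>v v)$i)"
    unfolding s_def using Ac v
    by (auto simp: scalar_prod_def sum_distrib_left mult.assoc atLeast0LessThan intro!: sum.cong)
  also have "\<dots> = (\<Sum>i<n. z * complex_of_real (cmod (v$i)^2))"
    using v by (auto simp: Av mult_ac intro!: sum.cong simp flip: complex_norm_square)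
  also have "\<dots> = z * (\<Sum>i<n. cmod (v$i)^2)"
    by (simp add: sum_distrib_left)
  finally have s1: "s = z * (\<Sum>i<n. cmod (v$i)^2)" .
  have symA: "\<And>i j. i < n \<Longrightarrow> j < n \<Longrightarrow> A$$(i,j) = A$$(j,i)"
    using sym A by (metis carrier_matD index_transpose_mat(1))
  have "cnj s = (\<Sum>i<n. \<Sum>j<n. v$i * Ac$$(i,j) * cnj (v$j))"
    unfolding s_def using Ac A by (simp add: Ac_def)
  also have "\<dots> = (\<Sum>j<n. \<Sum>i<n. v$i * Ac$$(i,j) * cnj (v$j))" by (rule sum.swap)
  also have "\<dots> = s" unfolding s_def using A symA
    by (auto simp: Ac_def intro!: sum.cong)
  finally have s2: "cnj s = s" .
  have N: "(\<Sum>i<n. cmod (v$i)^2) > 0"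
  proof -
    from v0 v obtain i where i: "i < n" "v$i \<noteq> 0" by (metis carrier_vecD eq_vecI index_zero_vec(1) index_zero_vec(2))
    have "cmod (v$i)^2 \<le> (\<Sum>i<n. cmod (v$i)^2)" using i by (intro member_le_sum) auto
    moreover have "cmod (v$i)^2 > 0" using i by simp
    ultimately show ?thesis by linarith
  qed
  define N' where "N' = (\<Sum>i<n. cmod (v$i)^2)"
  have s1': "s = z * complex_of_real N'" using s1 N'_def by simp
  have "cnj s = cnj z * complex_of_real N'" unfolding s1' by simp
  hence e1: "cnj z * complex_of_real N' = z * complex_of_real N'" using s2 s1' by simp
  have "N' \<noteq> 0" using N N'_def by simp
  hence e2: "complex_of_real N' \<noteq> 0" by (simp only: of_real_eq_0_iff) simp
  have cz: "cnj z = z" by (rule iffD1[OF mult_right_cancel[OF e2] e1])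
  have "Im z = 0" using arg_cong[OF cz, of Im] by simp
  hence zr: "complex_of_real (Re z) = z" by (simp add: complex_eq_iff)
  from z have "poly (map_poly complex_of_real (char_poly A)) z = 0" by (simp only: cp)
  hence "poly (map_poly complex_of_real (char_poly A)) (complex_of_real (Re z)) = 0" by (simp only: zr)
  hence "complex_of_real (poly (char_poly A) (Re z)) = 0" by (simp only: of_real_hom.poly_map_poly)
  hence "poly (char_poly A) (Re z) = 0" by (simp only: of_real_eq_0_iff)
  thus ?thesis using eigenvalue_root_char_poly[OF A] by blast
qed

lemma conj_real_vec[simp]: "conjugate (v :: real vec) = v"
  by (rule eq_vecI) auto

lemma sprod_self_ge0: "(v :: real vec) \<bullet> v \<ge> 0"
  unfolding scalar_prod_def by (auto intro: sum_nonneg)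

lemma sprod_self_0: assumes "(v :: real vec) \<bullet> v = 0" shows "v = 0\<^sub>v (dim_vec v)"
proof (rule eq_vecI)
  fix i assume i: "i < dim_vec (0\<^sub>v (dim_vec v) :: real vec)"
  have "(\<Sum>j\<in>{0..<dim_vec v}. v$j * v$j) = 0" using assms by (simp add: scalar_prod_def)
  hence "v$i * v$i = 0" using i by (subst (asm) sum_nonneg_eq_0_iff) auto
  thus "v $ i = 0\<^sub>v (dim_vec v) $ i" using i by simp
qed simp

lemma orth_completion:
  assumes u: "u \<in> carrier_vec n" and u1: "u \<bullet> u = 1"
  shows "\<exists>Q. orth n Q \<and> col Q 0 = u"
proof -
  interpret cof_vec_space n "TYPE(real)" .
  have u0: "u \<noteq> 0\<^sub>v n" using u1 by auto
  define b where "b = basis_completion u"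
  from basis_completion[OF u u0, folded b_def]
  have dist_b: "distinct b" and indep: "\<not> lin_dep (set b)" and bc: "set b \<subseteq> carrier_vec n"
    and hdb: "hd b = u" and len_b: "length b = n" by auto
  have n: "n \<noteq> 0" using u0 u by (metis carrier_vecD eq_vecI index_zero_vec(2) less_nat_zero_code)
  from hdb len_b n obtain vs where bv: "b = u # vs" by (cases b, auto)
  define ws where "ws = gram_schmidt n b"
  from gram_schmidt_result[OF bc dist_b indep ws_def]
  have wsc: "set ws \<subseteq> carrier_vec n" and orthw: "corthogonal ws" and lenw: "length ws = n" 
    by (auto simp: len_b)
  from gram_schmidt_hd[OF u, of vs, folded bv] have hdws: "hd ws = u" unfolding ws_def .
  define ws' where "ws' = map (\<lambda>w. (1 / sqrt (w \<bullet> w)) \<cdot>\<^sub>v w) ws"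
  have len': "length ws' = n" using lenw by (simp add: ws'_def)
  have c': "\<And>i. i < n \<Longrightarrow> ws' ! i \<in> carrier_vec n" using wsc lenw by (auto simp: ws'_def)
  have pos: "\<And>i. i < n \<Longrightarrow> ws ! i \<bullet> ws ! i > 0"
  proof -
    fix i assume i: "i < n"
    have "ws ! i \<bullet> ws ! i \<noteq> 0" using corthogonalD[OF orthw, of i i] i lenw by simp
    thus "ws ! i \<bullet> ws ! i > 0" using sprod_self_ge0[of "ws ! i"] by linarith
  qed
  have on: "\<And>i j. i < n \<Longrightarrow> j < n \<Longrightarrow> ws' ! i \<bullet> ws' ! j = (if i = j then 1 else 0)"
  proof -
    fix i j assume i: "i < n" and j: "j < n"
    have ci: "ws ! i \<in> carrier_vec n" and cj: "ws ! j \<in> carrier_vec n" using wsc lenw i j by auto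
    have "ws' ! i \<bullet> ws' ! j = (1 / sqrt (ws!i \<bullet> ws!i)) * (1 / sqrt (ws!j \<bullet> ws!j)) * (ws ! i \<bullet> ws ! j)"
      using i j lenw ci cj by (simp add: ws'_def)
    moreover have "i \<noteq> j \<Longrightarrow> ws ! i \<bullet> ws ! j = 0" using corthogonalD[OF orthw, of i j] i j lenw by simp
    moreover have "sqrt (ws!i \<bullet> ws!i) * sqrt (ws!i \<bullet> ws!i) = ws!i \<bullet> ws!i"
      using pos[OF i] by simp
    ultimately show "ws' ! i \<bullet> ws' ! j = (if i = j then 1 else 0)" using pos[OF i]
      by (auto simp: field_simps)
  qed
  define Q where "Q = mat_of_cols n ws'"
  have Qc: "Q \<in> carrier_mat n n" unfolding Q_def using len' mat_of_cols_carrier(1) by metis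
  have colQ: "\<And>i. i < n \<Longrightarrow> col Q i = ws' ! i" unfolding Q_def using c' len' by simp
  have "transpose_mat Q * Q = 1\<^sub>m n"
    by (rule eq_matI) (use Qc colQ on in auto)
  moreover have "col Q 0 = u"
  proof -
    have "ws ! 0 = u" using hdws lenw n by (cases ws) auto
    hence "ws' ! 0 = (1 / sqrt (u \<bullet> u)) \<cdot>\<^sub>v u" using lenw n by (simp add: ws'_def)
    thus ?thesis using colQ n u1 by simp
  qed
  ultimately show ?thesis using Qc unfolding orth_def by blast
qed

lemma mult_carrier_sq: "A \<in> carrier_mat n n \<Longrightarrow> B \<in> carrier_mat n n \<Longrightarrow> A * B \<in> carrier_mat n n"
  by (rule mult_carrier_mat)

lemma orth_mult: assumes "orth n Q1" "orth n P" shows "orth n (Q1 * P)"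
proof -
  have c: "Q1 \<in> carrier_mat n n" "P \<in> carrier_mat n n" using assms by (auto simp: orth_def)
  have "transpose_mat (Q1 * P) * (Q1 * P) = transpose_mat P * (transpose_mat Q1 * Q1) * P"
    using c by (simp add: transpose_mult assoc_mult_mat[of _ n n _ n _ n])
  also have "\<dots> = 1\<^sub>m n" using assms c by (simp add: orth_def)
  finally show ?thesis using c unfolding orth_def by auto
qed

lemma spectral:
  fixes A :: "real mat"
  assumes "A \<in> carrier_mat n n" and "transpose_mat A = A"
  shows "\<exists>Q f. orth n Q \<and> A = Q * dg n f * transpose_mat Q"
  using assms
proof (induction n arbitrary: A)
  case 0
  have "orth 0 (1\<^sub>m 0)" by (simp add: orth_def)
  moreover have "A = 1\<^sub>m 0 * dg 0 (\<lambda>_. 0) * transpose_mat (1\<^sub>m 0)"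
    by (rule eq_matI) (use 0 in auto)
  ultimately show ?case by blast
next
  case (Suc k)
  let ?n = "Suc k"
  have A: "A \<in> carrier_mat ?n ?n" and sym: "transpose_mat A = A" using Suc by auto
  obtain \<mu> where "eigenvalue A \<mu>" using real_eigenvalue_exists[OF A sym] by auto
  then obtain v where ev: "eigenvector A v \<mu>" unfolding eigenvalue_def by blast
  hence v: "v \<in> carrier_vec ?n" and v0: "v \<noteq> 0\<^sub>v ?n" and Av: "A *\<^sub>v v = \<mu> \<cdot>\<^sub>v v"
    using A unfolding eigenvector_def by auto
  have vv: "v \<bullet> v > 0"
  proof -
    have "v \<bullet> v \<noteq> 0" using v v0 sprod_self_0[of v] by auto
    thus ?thesis using sprod_self_ge0[of v] by linarith
  qed
  define u where "u = (1 / sqrt (v \<bullet> v)) \<cdot>\<^sub>v v"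
  have u: "u \<in> carrier_vec ?n" using v by (simp add: u_def)
  have u1: "u \<bullet> u = 1"
  proof -
    have "u \<bullet> u = (1 / sqrt (v \<bullet> v)) * (1 / sqrt (v \<bullet> v)) * (v \<bullet> v)" using v by (simp add: u_def)
    also have "\<dots> = 1" using vv by (simp add: field_simps)
    finally show ?thesis .
  qed
  have Au: "A *\<^sub>v u = \<mu> \<cdot>\<^sub>v u"
    unfolding u_def using mult_mat_vec[OF A v] Av by (simp add: smult_smult_assoc mult.commute)
  obtain Q1 where Q1: "orth ?n Q1" and c0: "col Q1 0 = u" using orth_completion[OF u u1] by blast
  have Q1c: "Q1 \<in> carrier_mat ?n ?n" using Q1 by (simp add: orth_def)
  define A' where "A' = transpose_mat Q1 * A * Q1"
  have A'c: "A' \<in> carrier_mat ?n ?n" using Q1c A by (simp add: A'_def)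
  have symA': "transpose_mat A' = A'"
  proof -
    have "transpose_mat A' = transpose_mat Q1 * transpose_mat (transpose_mat Q1 * A)"
      unfolding A'_def by (rule transpose_mult[of _ ?n ?n]) (use Q1c A in auto)
    also have "transpose_mat (transpose_mat Q1 * A) = transpose_mat A * Q1"
      using Q1c A by (subst transpose_mult[of _ ?n ?n]) auto
    hence "transpose_mat Q1 * transpose_mat (transpose_mat Q1 * A) = transpose_mat Q1 * (transpose_mat A * Q1)"
      by simp
    also have "\<dots> = A'" unfolding A'_def using Q1c A sym by simp
    finally show ?thesis .
  qed
  have on: "\<And>i j. i < ?n \<Longrightarrow> j < ?n \<Longrightarrow> col Q1 i \<bullet> col Q1 j = (if i = j then 1 else 0)"
  proof -
    fix i j assume i: "i < ?n" and j: "j < ?n"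
    have "(transpose_mat Q1 * Q1) $$ (i,j) = col Q1 i \<bullet> col Q1 j" using Q1c i j by simp
    thus "col Q1 i \<bullet> col Q1 j = (if i = j then 1 else 0)" using Q1 i j by (simp add: orth_def)
  qed
  have A'0: "\<And>i. i < ?n \<Longrightarrow> A' $$ (i,0) = (if i = 0 then \<mu> else 0)"
  proof -
    fix i assume i: "i < ?n"
    have "A' $$ (i,0) = (transpose_mat Q1 * (A * Q1)) $$ (i,0)"
      using Q1c A by (simp add: A'_def assoc_mult_mat[of _ ?n ?n _ ?n _ ?n])
    also have "\<dots> = col Q1 i \<bullet> (A *\<^sub>v col Q1 0)" using Q1c A i by (simp add: mult_mat_vec_def)
    also have "\<dots> = \<mu> * (col Q1 i \<bullet> col Q1 0)" using Au c0 Q1c i u by simp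
    finally show "A' $$ (i,0) = (if i = 0 then \<mu> else 0)" using on[OF i, of 0] by simp
  qed
  have symI: "\<And>i j. i < ?n \<Longrightarrow> j < ?n \<Longrightarrow> A' $$ (i,j) = A' $$ (j,i)"
    using symA' A'c by (metis carrier_matD index_transpose_mat(1))
  define A3 where "A3 = mat k k (\<lambda>(i,j). A' $$ (Suc i, Suc j))"
  have A3c: "A3 \<in> carrier_mat k k" by (simp add: A3_def)
  have symA3: "transpose_mat A3 = A3" by (rule eq_matI) (auto simp: A3_def symI)
  obtain R g where R: "orth k R" and A3eq: "A3 = R * dg k g * transpose_mat R"
    using Suc.IH[OF A3c symA3] by blast
  have Rc: "R \<in> carrier_mat k k" using R by (simp add: orth_def)
  define M1 where "M1 = (mat 1 1 (\<lambda>_. \<mu>) :: real mat)"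
  have M1c: "M1 \<in> carrier_mat 1 1" by (simp add: M1_def)
  have A'blk: "A' = four_block_mat M1 (0\<^sub>m 1 k) (0\<^sub>m k 1) A3"
    by (rule eq_matI) (use A'c A'0 symI in \<open>auto simp: A3_def M1_def\<close>)
  define f where "f = (\<lambda>i. if i = 0 then \<mu> else g (i - 1))"
  have dgblk: "dg ?n f = four_block_mat M1 (0\<^sub>m 1 k) (0\<^sub>m k 1) (dg k g)"
    by (rule eq_matI) (auto simp: M1_def f_def)
  define P where "P = four_block_mat (1\<^sub>m 1) (0\<^sub>m 1 k) (0\<^sub>m k 1) R"
  have Pc: "P \<in> carrier_mat ?n ?n" using four_block_carrier_mat[OF one_carrier_mat Rc, of 1]
    by (simp add: P_def)
  have PT: "transpose_mat P = four_block_mat (1\<^sub>m 1) (0\<^sub>m 1 k) (0\<^sub>m k 1) (transpose_mat R)"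
    unfolding P_def by (subst transpose_four_block_mat) (use Rc in auto)
  have "transpose_mat P * P = four_block_mat (1\<^sub>m 1) (0\<^sub>m 1 k) (0\<^sub>m k 1) (transpose_mat R * R)"
    unfolding PT unfolding P_def by (subst mult_four_block_mat) (use Rc in auto)
  hence P: "orth ?n P" using R Pc by (simp add: orth_def)
  have "P * dg ?n f * transpose_mat P = four_block_mat M1 (0\<^sub>m 1 k) (0\<^sub>m k 1) (R * dg k g * transpose_mat R)"
    unfolding PT dgblk unfolding P_def
    by (subst mult_four_block_mat, (use Rc M1c in auto)[8],
        subst mult_four_block_mat, (use Rc M1c in auto)[8]) (use Rc M1c in auto)
  hence A'eq: "A' = P * dg ?n f * transpose_mat P" unfolding A'blk A3eq by simp
  have "A = (Q1 * transpose_mat Q1) * A * (Q1 * transpose_mat Q1)"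
    using orth_right[OF Q1] A by simp
  also have "\<dots> = Q1 * A' * transpose_mat Q1"
    using Q1c A by (simp add: A'_def assoc_mult_mat[of _ ?n ?n _ ?n _ ?n])
  also have "\<dots> = (Q1 * P) * dg ?n f * transpose_mat (Q1 * P)"
  proof -
    have X: "P * dg ?n f * transpose_mat P \<in> carrier_mat ?n ?n" using Pc by (meson mult_carrier_mat dg_carrier transpose_carrier_mat)
    have "Q1 * (P * dg ?n f * transpose_mat P) * transpose_mat Q1 = Q1 * ((P * dg ?n f * transpose_mat P) * transpose_mat Q1)"
      using Q1c X by (simp only: assoc_mult_mat[OF Q1c X transpose_carrier_mat[THEN iffD2, OF Q1c]])
    also have "\<dots> = (Q1 * P) * dg ?n f * transpose_mat (Q1 * P)"
      using Q1c Pc by (simp add: transpose_mult assoc_mult_mat[of _ ?n ?n _ ?n _ ?n] mult_carrier_sq)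
    finally show ?thesis unfolding A'eq .
  qed
  finally show ?case using orth_mult[OF Q1 P] by blast
qed



lemma holder_sum:
  fixes a b :: "'i \<Rightarrow> real"
  assumes S: "finite S" and a: "\<And>i. i \<in> S \<Longrightarrow> a i \<ge> 0" and b: "\<And>i. i \<in> S \<Longrightarrow> b i \<ge> 0"
    and P: "P > 1" and Q: "Q > 1" and PQ: "1/P + 1/Q = 1"
  shows "(\<Sum>i\<in>S. a i * b i) \<le> (\<Sum>i\<in>S. a i powr P) powr (1/P) * (\<Sum>i\<in>S. b i powr Q) powr (1/Q)"
proof -
  define SA where "SA = (\<Sum>i\<in>S. a i powr P)"
  define SB where "SB = (\<Sum>i\<in>S. b i powr Q)"
  define A where "A = SA powr (1/P)"
  define B where "B = SB powr (1/Q)"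
  have SA0: "SA \<ge> 0" unfolding SA_def by (intro sum_nonneg) auto
  have SB0: "SB \<ge> 0" unfolding SB_def by (intro sum_nonneg) auto
  show ?thesis
  proof (cases "SA = 0 \<or> SB = 0")
    case True
    hence "\<forall>i\<in>S. a i * b i = 0"
    proof
      assume "SA = 0"
      hence "\<forall>i\<in>S. a i powr P = 0" unfolding SA_def using S by (subst (asm) sum_nonneg_eq_0_iff) auto
      thus ?thesis by simp
    next
      assume "SB = 0"
      hence "\<forall>i\<in>S. b i powr Q = 0" unfolding SB_def using S by (subst (asm) sum_nonneg_eq_0_iff) auto
      thus ?thesis by simp
    qed
    hence "(\<Sum>i\<in>S. a i * b i) = 0" by simp
    thus ?thesis using SA0 SB0 unfolding SA_def[symmetric] SB_def[symmetric] by simp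
  next
    case False
    hence SAp: "SA > 0" and SBp: "SB > 0" using SA0 SB0 by auto
    hence Ap: "A > 0" and Bp: "B > 0" by (auto simp: A_def B_def)
    have AP: "A powr P = SA" using SAp P by (simp add: A_def powr_powr)
    have BQ: "B powr Q = SB" using SBp Q by (simp add: B_def powr_powr)
    have "(\<Sum>i\<in>S. (a i / A) * (b i / B)) \<le> (\<Sum>i\<in>S. (a i / A) powr P / P + (b i / B) powr Q / Q)"
      by (intro sum_mono Youngs_inequality) (use P Q PQ a b Ap Bp in auto)
    also have "\<dots> = (\<Sum>i\<in>S. a i powr P) / A powr P / P + (\<Sum>i\<in>S. b i powr Q) / B powr Q / Q"
      using a b Ap Bp by (simp add: sum.distrib powr_divide sum_divide_distrib)
    also have "\<dots> = 1" using AP BQ SAp SBp PQ by (simp add: SA_def SB_def)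
    finally have "(\<Sum>i\<in>S. a i * b i) / (A * B) \<le> 1"
      by (simp add: sum_divide_distrib)
    thus ?thesis using Ap Bp by (simp add: A_def B_def SA_def SB_def field_simps)
  qed
qed

lemma jensen_powr:
  fixes w x :: "'i \<Rightarrow> real"
  assumes S: "finite S" and w: "\<And>i. i \<in> S \<Longrightarrow> w i \<ge> 0" and x: "\<And>i. i \<in> S \<Longrightarrow> x i \<ge> 0"
    and sw: "(\<Sum>i\<in>S. w i) = 1" and r: "r \<ge> 1"
  shows "(\<Sum>i\<in>S. w i * x i) powr r \<le> (\<Sum>i\<in>S. w i * x i powr r)"
proof (cases "r = 1")
  case True
  have "(\<Sum>i\<in>S. w i * x i) \<ge> 0" using w x by (intro sum_nonneg) auto
  thus ?thesis using True x by (simp add: powr_one_gt_zero_iff)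
next
  case False
  hence r1: "r > 1" using r by simp
  define P where "P = r / (r - 1)"
  have P1: "P > 1" using r1 by (simp add: P_def field_simps)
  have PQ: "1/P + 1/r = 1" using r1 by (simp add: P_def field_simps)
  have "(\<Sum>i\<in>S. w i * x i) = (\<Sum>i\<in>S. (w i powr (1/P)) * (w i powr (1/r) * x i))"
  proof (intro sum.cong refl)
    fix i assume i: "i \<in> S"
    show "w i * x i = w i powr (1/P) * (w i powr (1/r) * x i)"
    proof (cases "w i = 0")
      case False
      hence "w i powr (1/P) * w i powr (1/r) = w i" using w[OF i] PQ by (simp add: powr_add[symmetric])
      thus ?thesis by (metis mult.assoc)
    qed simp
  qed
  also have "\<dots> \<le> (\<Sum>i\<in>S. (w i powr (1/P)) powr P) powr (1/P) * (\<Sum>i\<in>S. (w i powr (1/r) * x i) powr r) powr (1/r)"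
    by (rule holder_sum) (use S w x P1 r1 PQ in auto)
  also have "(\<Sum>i\<in>S. (w i powr (1/P)) powr P) = 1"
    using sw w P1 by (simp add: powr_powr)
  also have "(\<Sum>i\<in>S. (w i powr (1/r) * x i) powr r) = (\<Sum>i\<in>S. w i * x i powr r)"
    using w x r1 by (intro sum.cong refl) (simp add: powr_mult powr_powr)
  finally have le: "(\<Sum>i\<in>S. w i * x i) \<le> (\<Sum>i\<in>S. w i * x i powr r) powr (1/r)" by simp
  have nn: "(\<Sum>i\<in>S. w i * x i) \<ge> 0" using w x by (intro sum_nonneg) auto
  have nn2: "(\<Sum>i\<in>S. w i * x i powr r) \<ge> 0" using w by (intro sum_nonneg) auto
  have "(\<Sum>i\<in>S. w i * x i) powr r \<le> ((\<Sum>i\<in>S. w i * x i powr r) powr (1/r)) powr r"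
    by (rule powr_mono2) (use nn le r1 in auto)
  also have "\<dots> = (\<Sum>i\<in>S. w i * x i powr r)" using nn2 r1 by (simp add: powr_powr)
  finally show ?thesis .
qed

lemma jensen_concave:
  fixes w x :: "'i \<Rightarrow> real"
  assumes S: "finite S" and w: "\<And>i. i \<in> S \<Longrightarrow> w i \<ge> 0" and x: "\<And>i. i \<in> S \<Longrightarrow> x i \<ge> 0"
    and sw: "(\<Sum>i\<in>S. w i) = 1" and s0: "s > 0" and s1: "s \<le> 1"
  shows "(\<Sum>i\<in>S. w i * x i powr s) \<le> (\<Sum>i\<in>S. w i * x i) powr s"
proof -
  have "(\<Sum>i\<in>S. w i * x i powr s) powr (1/s) \<le> (\<Sum>i\<in>S. w i * (x i powr s) powr (1/s))"
    by (rule jensen_powr) (use S w x sw s0 s1 in auto)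
  also have "\<dots> = (\<Sum>i\<in>S. w i * x i)" using x s0 by (intro sum.cong refl) (simp add: powr_powr)
  finally have le: "(\<Sum>i\<in>S. w i * x i powr s) powr (1/s) \<le> (\<Sum>i\<in>S. w i * x i)" .
  have nn: "(\<Sum>i\<in>S. w i * x i powr s) \<ge> 0" using w by (intro sum_nonneg) auto
  have "(\<Sum>i\<in>S. w i * x i powr s) = ((\<Sum>i\<in>S. w i * x i powr s) powr (1/s)) powr s"
    using nn s0 by (simp add: powr_powr)
  also have "\<dots> \<le> (\<Sum>i\<in>S. w i * x i) powr s"
    by (rule powr_mono2) (use le s0 in auto)
  finally show ?thesis .
qed



lemma sprod_transpose:
  fixes A :: "real mat"
  assumes A: "A \<in> carrier_mat a b" and x: "x \<in> carrier_vec a" and y: "y \<in> carrier_vec b"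
  shows "x \<bullet> (A *\<^sub>v y) = (transpose_mat A *\<^sub>v x) \<bullet> y"
proof -
  have "x \<bullet> (A *\<^sub>v y) = (\<Sum>i<a. x$i * (\<Sum>j<b. A$$(i,j) * y$j))"
    using A x y by (simp add: scalar_prod_def row_def atLeast0LessThan)
  also have "\<dots> = (\<Sum>i<a. \<Sum>j<b. x$i * A$$(i,j) * y$j)" by (simp add: sum_distrib_left mult.assoc)
  also have "\<dots> = (\<Sum>j<b. \<Sum>i<a. x$i * A$$(i,j) * y$j)" by (rule sum.swap)
  also have "\<dots> = (\<Sum>j<b. (\<Sum>i<a. A$$(i,j) * x$i) * y$j)"
    by (intro sum.cong refl) (simp add: sum_distrib_left sum_distrib_right mult_ac)
  also have "\<dots> = (transpose_mat A *\<^sub>v x) \<bullet> y"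
    using A x y by (simp add: scalar_prod_def row_def col_def atLeast0LessThan)
  finally show ?thesis .
qed

lemma orth_cols:
  assumes Q: "orth k Q" and i: "i < k" and j: "j < k"
  shows "col Q i \<bullet> col Q j = (if i = j then 1 else 0)"
proof -
  have Qc: "Q \<in> carrier_mat k k" using Q by (simp add: orth_def)
  have "(transpose_mat Q * Q) $$ (i,j) = col Q i \<bullet> col Q j" using Qc i j by simp
  thus ?thesis using Q i j by (simp add: orth_def)
qed

lemma orthT_vec: assumes Q: "orth k Q" and x: "x \<in> carrier_vec k" and i: "i < k"
  shows "(transpose_mat Q *\<^sub>v x) $ i = col Q i \<bullet> x"
proof -
  have Qc: "Q \<in> carrier_mat k k" using Q by (simp add: orth_def)
  thus ?thesis using x i by simp
qed

lemma dg_mult_vec: assumes v: "v \<in> carrier_vec k" and i: "i < k"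
  shows "(dg k f *\<^sub>v v) $ i = f i * v $ i"
proof -
  have "(dg k f *\<^sub>v v) $ i = (\<Sum>j\<in>{0..<k}. (if i = j then f i else 0) * v $ j)"
    using v i by (simp add: scalar_prod_def row_def)
  also have "\<dots> = (\<Sum>j\<in>{0..<k}. if j = i then f i * v $ j else 0)" by (intro sum.cong) auto
  also have "\<dots> = f i * v $ i" using i by simp
  finally show ?thesis .
qed

lemma assoc3_vec: assumes "Q \<in> carrier_mat k k" "D \<in> carrier_mat k k" "R \<in> carrier_mat k k" "y \<in> carrier_vec k"
  shows "(Q * D * R) *\<^sub>v y = Q *\<^sub>v (D *\<^sub>v (R *\<^sub>v y))"
proof -
  have "(Q * D * R) *\<^sub>v y = (Q * D) *\<^sub>v (R *\<^sub>v y)"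
    by (rule assoc_mult_mat_vec[of _ k k _ k]) (use assms in \<open>auto simp: mult_carrier_sq\<close>)
  also have "\<dots> = Q *\<^sub>v (D *\<^sub>v (R *\<^sub>v y))" using assms by (meson assoc_mult_mat_vec mult_mat_vec_carrier)
  finally show ?thesis .
qed

lemma orth_norm:
  assumes Q: "orth k Q" and x: "x \<in> carrier_vec k"
  shows "(\<Sum>i<k. (col Q i \<bullet> x)^2) = x \<bullet> x"
proof -
  have Qc: "Q \<in> carrier_mat k k" using Q by (simp add: orth_def)
  have "(\<Sum>i<k. (col Q i \<bullet> x)^2) = (transpose_mat Q *\<^sub>v x) \<bullet> (transpose_mat Q *\<^sub>v x)"
    using Q Qc x by (simp add: scalar_prod_def orthT_vec power2_eq_square atLeast0LessThan)
  also have "\<dots> = x \<bullet> (Q *\<^sub>v (transpose_mat Q *\<^sub>v x))"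
    using sprod_transpose[OF Qc x, of "transpose_mat Q *\<^sub>v x"] Qc x by simp
  also have "Q *\<^sub>v (transpose_mat Q *\<^sub>v x) = x"
    using orth_right[OF Q] Qc x by (metis assoc_mult_mat_vec one_mult_mat_vec transpose_carrier_mat)
  finally show ?thesis .
qed

lemma spec_bilin:
  assumes Q: "orth k Q" and G: "G = Q * dg k f * transpose_mat Q"
    and x: "x \<in> carrier_vec k" and y: "y \<in> carrier_vec k"
  shows "x \<bullet> (G *\<^sub>v y) = (\<Sum>i<k. f i * (col Q i \<bullet> x) * (col Q i \<bullet> y))"
proof -
  have Qc: "Q \<in> carrier_mat k k" using Q by (simp add: orth_def)
  have "G *\<^sub>v y = Q *\<^sub>v (dg k f *\<^sub>v (transpose_mat Q *\<^sub>v y))"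
    unfolding G using Qc y by (intro assoc3_vec) auto
  hence "x \<bullet> (G *\<^sub>v y) = (transpose_mat Q *\<^sub>v x) \<bullet> (dg k f *\<^sub>v (transpose_mat Q *\<^sub>v y))"
  proof -
    have "dg k f *\<^sub>v (transpose_mat Q *\<^sub>v y) \<in> carrier_vec k"
      using Qc y by (meson dg_carrier mult_mat_vec_carrier transpose_carrier_mat)
    thus ?thesis using sprod_transpose[OF Qc x] by (metis \<open>G *\<^sub>v y = _\<close>)
  qed
  also have "\<dots> = (\<Sum>i<k. (col Q i \<bullet> x) * (f i * (col Q i \<bullet> y)))"
  proof -
    have "\<And>i. i < k \<Longrightarrow> (dg k f *\<^sub>v (transpose_mat Q *\<^sub>v y)) $ i = f i * (col Q i \<bullet> y)"
    proof -
      fix i assume i: "i < k"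
      have "(dg k f *\<^sub>v (transpose_mat Q *\<^sub>v y)) $ i = (\<Sum>j<k. dg k f $$ (i,j) * (transpose_mat Q *\<^sub>v y) $ j)"
        using i Qc y by (simp add: scalar_prod_def row_def atLeast0LessThan)
      also have "\<dots> = (\<Sum>j<k. if j = i then f i * (transpose_mat Q *\<^sub>v y) $ j else 0)"
        using i by (intro sum.cong) auto
      also have "\<dots> = f i * (col Q i \<bullet> y)" using i orthT_vec[OF Q y i] by simp
      finally show "(dg k f *\<^sub>v (transpose_mat Q *\<^sub>v y)) $ i = f i * (col Q i \<bullet> y)" .
    qed
    thus ?thesis using Qc x y by (simp add: scalar_prod_def orthT_vec[OF Q x] atLeast0LessThan)
  qed
  finally show ?thesis by (simp add: mult_ac)
qed

lemma spec_eigvec: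
  assumes Q: "orth k Q" and G: "G = Q * dg k f * transpose_mat Q" and j: "j < k"
  shows "G *\<^sub>v col Q j = f j \<cdot>\<^sub>v col Q j"
proof -
  have Qc: "Q \<in> carrier_mat k k" using Q by (simp add: orth_def)
  have cj: "col Q j \<in> carrier_vec k" using Qc j by simp
  have u: "transpose_mat Q *\<^sub>v col Q j = unit_vec k j"
    by (rule eq_vecI) (use Qc j orth_cols[OF Q] in auto)
  have d: "dg k f *\<^sub>v unit_vec k j = f j \<cdot>\<^sub>v unit_vec k j"
    by (rule eq_vecI) (use j in \<open>auto simp: dg_mult_vec\<close>)
  have "G *\<^sub>v col Q j = Q *\<^sub>v (dg k f *\<^sub>v (transpose_mat Q *\<^sub>v col Q j))"
    unfolding G using Qc cj by (intro assoc3_vec) auto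
  also have "\<dots> = f j \<cdot>\<^sub>v (Q *\<^sub>v unit_vec k j)" unfolding u d using Qc mult_mat_vec by auto
  also have "Q *\<^sub>v unit_vec k j = col Q j" by (rule eq_vecI) (use Qc j in auto)
  finally show ?thesis .
qed

lemma gram_spectral:
  fixes Y :: "real mat"
  assumes Y: "Y \<in> carrier_mat a k"
  shows "\<exists>Q f. orth k Q \<and> transpose_mat Y * Y = Q * dg k f * transpose_mat Q \<and> (\<forall>i<k. f i \<ge> 0)"
proof -
  have c: "transpose_mat Y * Y \<in> carrier_mat k k" using Y by simp
  have s: "transpose_mat (transpose_mat Y * Y) = transpose_mat Y * Y"
    using Y by (simp add: transpose_mult[of _ k a])
  obtain Q f where Q: "orth k Q" and G: "transpose_mat Y * Y = Q * dg k f * transpose_mat Q"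
    using spectral[OF c s] by blast
  have Qc: "Q \<in> carrier_mat k k" using Q by (simp add: orth_def)
  have "\<forall>i<k. f i \<ge> 0"
  proof (intro allI impI)
    fix i assume i: "i < k"
    have ci: "col Q i \<in> carrier_vec k" using Qc i by simp
    have "col Q i \<bullet> ((transpose_mat Y * Y) *\<^sub>v col Q i) = f i * (col Q i \<bullet> col Q i)"
      using spec_eigvec[OF Q G i] ci by simp
    also have "\<dots> = f i" using orth_cols[OF Q i i] by simp
    finally have "f i = col Q i \<bullet> ((transpose_mat Y * Y) *\<^sub>v col Q i)" by simp
    also have "\<dots> = (Y *\<^sub>v col Q i) \<bullet> (Y *\<^sub>v col Q i)"
      using sprod_transpose[of "transpose_mat Y" k a "col Q i" "Y *\<^sub>v col Q i"] Y ci by simp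
    finally show "f i \<ge> 0" using sprod_self_ge0 by simp
  qed
  thus ?thesis using Q G by blast
qed



lemma sprod_comm_real: "x \<in> carrier_vec k \<Longrightarrow> y \<in> carrier_vec k \<Longrightarrow> (x :: real vec) \<bullet> y = y \<bullet> x"
  by (rule comm_scalar_prod)

lemma LU:
  fixes U :: "real mat"
  assumes U: "U \<in> carrier_mat m d" and G: "orth d G" and H: "orth d H"
    and UU: "transpose_mat U * U = H * dg d lam * transpose_mat H" and lam: "\<forall>i<d. lam i \<ge> 0"
    and r: "r \<ge> 1"
  shows "(\<Sum>k<d. ((U *\<^sub>v col G k) \<bullet> (U *\<^sub>v col G k)) powr r) \<le> (\<Sum>i<d. lam i powr r)"
proof -
  have Gc: "G \<in> carrier_mat d d" and Hc: "H \<in> carrier_mat d d" using G H by (auto simp: orth_def)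
  define w where "w i k = (col H i \<bullet> col G k)^2" for i k
  have nU: "\<And>k. k < d \<Longrightarrow> (U *\<^sub>v col G k) \<bullet> (U *\<^sub>v col G k) = (\<Sum>i<d. w i k * lam i)"
  proof -
    fix k assume k: "k < d"
    have gk: "col G k \<in> carrier_vec d" using Gc k by simp
    have "(U *\<^sub>v col G k) \<bullet> (U *\<^sub>v col G k) = col G k \<bullet> ((transpose_mat U * U) *\<^sub>v col G k)"
      using sprod_transpose[of "transpose_mat U" d m "col G k" "U *\<^sub>v col G k"] U gk by simp
    also have "\<dots> = (\<Sum>i<d. lam i * (col H i \<bullet> col G k) * (col H i \<bullet> col G k))"
      by (rule spec_bilin[OF H UU gk gk])
    finally show "(U *\<^sub>v col G k) \<bullet> (U *\<^sub>v col G k) = (\<Sum>i<d. w i k * lam i)"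
      by (simp add: w_def power2_eq_square mult_ac)
  qed
  have sw1: "\<And>k. k < d \<Longrightarrow> (\<Sum>i<d. w i k) = 1"
  proof -
    fix k assume k: "k < d"
    have gk: "col G k \<in> carrier_vec d" using Gc k by simp
    show "(\<Sum>i<d. w i k) = 1" unfolding w_def orth_norm[OF H gk] using orth_cols[OF G k k] by simp
  qed
  have sw2: "\<And>i. i < d \<Longrightarrow> (\<Sum>k<d. w i k) = 1"
  proof -
    fix i assume i: "i < d"
    have hi: "col H i \<in> carrier_vec d" using Hc i by simp
    have "(\<Sum>k<d. w i k) = (\<Sum>k<d. (col G k \<bullet> col H i)^2)"
      unfolding w_def using Gc Hc i by (intro sum.cong refl) (simp add: sprod_comm_real[of _ d])
    also have "\<dots> = 1" unfolding orth_norm[OF G hi] using orth_cols[OF H i i] by simp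
    finally show "(\<Sum>k<d. w i k) = 1" .
  qed
  have "(\<Sum>k<d. ((U *\<^sub>v col G k) \<bullet> (U *\<^sub>v col G k)) powr r) = (\<Sum>k<d. (\<Sum>i<d. w i k * lam i) powr r)"
    by (intro sum.cong refl) (simp add: nU)
  also have "\<dots> \<le> (\<Sum>k<d. \<Sum>i<d. w i k * lam i powr r)"
    by (intro sum_mono jensen_powr) (use lam r sw1 in \<open>auto simp: w_def\<close>)
  also have "\<dots> = (\<Sum>i<d. (\<Sum>k<d. w i k) * lam i powr r)"
    by (subst sum.swap) (simp add: sum_distrib_right)
  also have "\<dots> = (\<Sum>i<d. lam i powr r)" by (intro sum.cong refl) (simp add: sw2)
  finally show ?thesis .
qed

lemma LX:
  fixes X :: "real mat" and e :: "nat \<Rightarrow> real vec"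
  assumes X: "X \<in> carrier_mat m n" and C: "orth n C"
    and XX: "transpose_mat X * X = C * dg n mu * transpose_mat C" and mu: "\<forall>i<n. mu i \<ge> 0"
    and K: "finite K" and e: "\<And>k. k \<in> K \<Longrightarrow> e k \<in> carrier_vec n"
    and e1: "\<And>k. k \<in> K \<Longrightarrow> e k \<bullet> e k = 1"
    and cov: "\<And>i. i < n \<Longrightarrow> mu i > 0 \<Longrightarrow> (\<Sum>k\<in>K. (col C i \<bullet> e k)^2) = 1"
    and s0: "s > 0" and s1: "s \<le> 1"
  shows "(\<Sum>i<n. mu i powr s) \<le> (\<Sum>k\<in>K. ((X *\<^sub>v e k) \<bullet> (X *\<^sub>v e k)) powr s)"
proof -
  have Cc: "C \<in> carrier_mat n n" using C by (auto simp: orth_def)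
  define w where "w i k = (col C i \<bullet> e k)^2" for i k
  have nX: "\<And>k. k \<in> K \<Longrightarrow> (X *\<^sub>v e k) \<bullet> (X *\<^sub>v e k) = (\<Sum>i<n. w i k * mu i)"
  proof -
    fix k assume k: "k \<in> K"
    have ek: "e k \<in> carrier_vec n" using e k .
    have "(X *\<^sub>v e k) \<bullet> (X *\<^sub>v e k) = e k \<bullet> ((transpose_mat X * X) *\<^sub>v e k)"
      using sprod_transpose[of "transpose_mat X" n m "e k" "X *\<^sub>v e k"] X ek by simp
    also have "\<dots> = (\<Sum>i<n. mu i * (col C i \<bullet> e k) * (col C i \<bullet> e k))"
      by (rule spec_bilin[OF C XX ek ek])
    finally show "(X *\<^sub>v e k) \<bullet> (X *\<^sub>v e k) = (\<Sum>i<n. w i k * mu i)"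
      by (simp add: w_def power2_eq_square mult_ac)
  qed
  have sw1: "\<And>k. k \<in> K \<Longrightarrow> (\<Sum>i<n. w i k) = 1"
    unfolding w_def using orth_norm[OF C e] e1 by simp
  have "(\<Sum>i<n. mu i powr s) = (\<Sum>i<n. (\<Sum>k\<in>K. w i k) * mu i powr s)"
  proof (intro sum.cong refl)
    fix i assume i: "i \<in> {..<n}"
    show "mu i powr s = (\<Sum>k\<in>K. w i k) * mu i powr s"
    proof (cases "mu i > 0")
      case True thus ?thesis using cov[of i] i by (simp add: w_def)
    next
      case False hence "mu i = 0" using mu i by force
      thus ?thesis by simp
    qed
  qed
  also have "\<dots> = (\<Sum>k\<in>K. \<Sum>i<n. w i k * mu i powr s)"
    by (subst sum.swap) (simp add: sum_distrib_right)
  also have "\<dots> \<le> (\<Sum>k\<in>K. (\<Sum>i<n. w i k * mu i) powr s)"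
    by (intro sum_mono jensen_concave) (use mu s0 s1 sw1 in \<open>auto simp: w_def\<close>)
  also have "\<dots> = (\<Sum>k\<in>K. ((X *\<^sub>v e k) \<bullet> (X *\<^sub>v e k)) powr s)"
    by (intro sum.cong refl) (simp add: nX)
  finally show ?thesis .
qed

lemma assoc3_gen: assumes "A \<in> carrier_mat a b" "B \<in> carrier_mat b c" "C \<in> carrier_mat c e" "y \<in> carrier_vec e"
  shows "(A * B * C) *\<^sub>v y = A *\<^sub>v (B *\<^sub>v (C *\<^sub>v y))"
proof -
  have "(A * B * C) *\<^sub>v y = (A * B) *\<^sub>v (C *\<^sub>v y)"
    by (rule assoc_mult_mat_vec[of _ a c _ e]) (use assms in auto)
  also have "\<dots> = A *\<^sub>v (B *\<^sub>v (C *\<^sub>v y))" using assms by (meson assoc_mult_mat_vec mult_mat_vec_carrier)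
  finally show ?thesis .
qed

lemma gram_prod:
  fixes U V :: "real mat"
  assumes U: "U \<in> carrier_mat m d" and V: "V \<in> carrier_mat n d"
  shows "transpose_mat (U * transpose_mat V) * (U * transpose_mat V) = V * (transpose_mat U * U) * transpose_mat V"
proof -
  have "transpose_mat (U * transpose_mat V) = V * transpose_mat U"
    using transpose_mult[of U m d "transpose_mat V" n] U V by simp
  hence "transpose_mat (U * transpose_mat V) * (U * transpose_mat V) = V * transpose_mat U * (U * transpose_mat V)"
    by simp
  also have "\<dots> = V * (transpose_mat U * (U * transpose_mat V))"
    by (rule assoc_mult_mat[of _ n d _ m _ n]) (use U V in auto)
  also have "transpose_mat U * (U * transpose_mat V) = (transpose_mat U * U) * transpose_mat V"
    by (rule assoc_mult_mat[symmetric, of _ d m _ d _ n]) (use U V in auto)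
  also have "V * (transpose_mat U * U * transpose_mat V) = V * (transpose_mat U * U) * transpose_mat V"
    by (rule assoc_mult_mat[symmetric, of _ n d _ d _ n]) (use U V in auto)
  finally show ?thesis .
qed

lemma sqrt_powr: "x \<ge> 0 \<Longrightarrow> sqrt x powr p = x powr (p / 2)"
  by (simp add: powr_half_sqrt[symmetric] powr_powr)

lemma L_cov:
  fixes U V :: "real mat"
  assumes U: "U \<in> carrier_mat m d" and V: "V \<in> carrier_mat n d"
    and G: "orth d G" and VV: "transpose_mat V * V = G * dg d tau * transpose_mat G" and tau: "\<forall>k<d. tau k \<ge> 0"
    and C: "orth n C" and XX: "transpose_mat (U * transpose_mat V) * (U * transpose_mat V) = C * dg n mu * transpose_mat C"
    and i: "i < n" and mui: "mu i > 0"
  shows "(\<Sum>k\<in>{k. k < d \<and> tau k > 0}. (col C i \<bullet> ((1 / sqrt (tau k)) \<cdot>\<^sub>v (V *\<^sub>v col G k)))^2) = 1"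
proof -
  have Gc: "G \<in> carrier_mat d d" and Cc: "C \<in> carrier_mat n n" using G C by (auto simp: orth_def)
  define M where "M = transpose_mat U * U"
  have Mc: "M \<in> carrier_mat d d" using U by (simp add: M_def)
  define ci where "ci = col C i"
  have ci: "ci \<in> carrier_vec n" using Cc i by (simp add: ci_def)
  define y where "y = transpose_mat V *\<^sub>v ci"
  have y: "y \<in> carrier_vec d" using V ci by (simp add: y_def)
  define z where "z = M *\<^sub>v y"
  have z: "z \<in> carrier_vec d" using Mc y by (simp add: z_def)
  have eig: "(C * dg n mu * transpose_mat C) *\<^sub>v ci = mu i \<cdot>\<^sub>v ci"
    unfolding ci_def by (rule spec_eigvec[OF C refl i])
  have "(C * dg n mu * transpose_mat C) *\<^sub>v ci = (V * M * transpose_mat V) *\<^sub>v ci"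
    unfolding XX[symmetric] gram_prod[OF U V] M_def ..
  also have "\<dots> = V *\<^sub>v z" unfolding z_def y_def
    by (rule assoc3_gen) (use V Mc ci in auto)
  finally have Vz: "V *\<^sub>v z = mu i \<cdot>\<^sub>v ci" using eig by simp
  have VVg: "\<And>k. k < d \<Longrightarrow> (transpose_mat V * V) *\<^sub>v col G k = tau k \<cdot>\<^sub>v col G k"
    using spec_eigvec[OF G VV] by blast
  have muy: "mu i \<cdot>\<^sub>v y = (transpose_mat V * V) *\<^sub>v z"
  proof -
    have "mu i \<cdot>\<^sub>v y = transpose_mat V *\<^sub>v (mu i \<cdot>\<^sub>v ci)" unfolding y_def
      using mult_mat_vec[of "transpose_mat V" d n ci "mu i"] V ci by simp
    also have "\<dots> = transpose_mat V *\<^sub>v (V *\<^sub>v z)" unfolding Vz ..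
    also have "\<dots> = (transpose_mat V * V) *\<^sub>v z" using V z by simp
    finally show ?thesis .
  qed
  have trm: "\<And>k. k < d \<Longrightarrow> tau k > 0 \<Longrightarrow> (ci \<bullet> ((1 / sqrt (tau k)) \<cdot>\<^sub>v (V *\<^sub>v col G k)))^2 = tau k * (col G k \<bullet> z)^2 / (mu i)^2"
  proof -
    fix k assume k: "k < d" and tk: "tau k > 0"
    have gk: "col G k \<in> carrier_vec d" using Gc k by simp
    have "ci \<bullet> (V *\<^sub>v col G k) = y \<bullet> col G k" unfolding y_def by (rule sprod_transpose[OF V ci gk])
    also have "y \<bullet> col G k = (1 / mu i) * ((mu i \<cdot>\<^sub>v y) \<bullet> col G k)" using mui y gk by simp
    also have "(mu i \<cdot>\<^sub>v y) \<bullet> col G k = col G k \<bullet> ((transpose_mat V * V) *\<^sub>v z)"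
      unfolding muy using V z gk by (simp add: sprod_comm_real[of _ d])
    also have "\<dots> = (transpose_mat (transpose_mat V * V) *\<^sub>v col G k) \<bullet> z"
      by (rule sprod_transpose) (use V gk z in auto)
    also have "transpose_mat (transpose_mat V * V) = transpose_mat V * V"
      using V by (simp add: transpose_mult[of _ d n])
    also have "(transpose_mat V * V *\<^sub>v col G k) \<bullet> z = tau k * (col G k \<bullet> z)"
      using VVg[OF k] gk z by simp
    finally have eq: "ci \<bullet> (V *\<^sub>v col G k) = tau k * (col G k \<bullet> z) / mu i" by simp
    have "ci \<bullet> ((1 / sqrt (tau k)) \<cdot>\<^sub>v (V *\<^sub>v col G k)) = (1 / sqrt (tau k)) * (ci \<bullet> (V *\<^sub>v col G k))"
      using V gk ci by simp
    also have "\<dots> = (1 / sqrt (tau k)) * (tau k * (col G k \<bullet> z) / mu i)" unfolding eq ..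
    finally have "(ci \<bullet> ((1 / sqrt (tau k)) \<cdot>\<^sub>v (V *\<^sub>v col G k)))^2 = (1 / sqrt (tau k))^2 * tau k^2 * (col G k \<bullet> z)^2 / (mu i)^2"
      by (simp add: power_mult_distrib power_divide)
    also have "(1 / sqrt (tau k))^2 = 1 / tau k" using tk by (simp add: power_divide)
    finally show "(ci \<bullet> ((1 / sqrt (tau k)) \<cdot>\<^sub>v (V *\<^sub>v col G k)))^2 = tau k * (col G k \<bullet> z)^2 / (mu i)^2"
      using tk by (simp add: power2_eq_square)
  qed
  have "(\<Sum>k\<in>{k. k < d \<and> tau k > 0}. (ci \<bullet> ((1 / sqrt (tau k)) \<cdot>\<^sub>v (V *\<^sub>v col G k)))^2)
      = (\<Sum>k\<in>{k. k < d \<and> tau k > 0}. tau k * (col G k \<bullet> z)^2 / (mu i)^2)"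
    by (intro sum.cong refl) (simp add: trm)
  also have "\<dots> = (\<Sum>k<d. tau k * (col G k \<bullet> z)^2 / (mu i)^2)"
  proof (rule sum.mono_neutral_left)
    show "\<forall>k\<in>{..<d} - {k. k < d \<and> tau k > 0}. tau k * (col G k \<bullet> z)^2 / (mu i)^2 = 0"
      using tau by force
  qed auto
  also have "\<dots> = (z \<bullet> ((transpose_mat V * V) *\<^sub>v z)) / (mu i)^2"
    unfolding spec_bilin[OF G VV z z] by (simp add: sum_divide_distrib power2_eq_square mult_ac)
  also have "z \<bullet> ((transpose_mat V * V) *\<^sub>v z) = (V *\<^sub>v z) \<bullet> (V *\<^sub>v z)"
    using sprod_transpose[of "transpose_mat V" d n z "V *\<^sub>v z"] V z by simp
  also have "\<dots> = (mu i)^2 * (ci \<bullet> ci)" unfolding Vz using ci by (simp add: power2_eq_square)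
  also have "ci \<bullet> ci = 1" unfolding ci_def using orth_cols[OF C i i] by simp
  finally show ?thesis using mui unfolding ci_def by simp
qed

lemma L_holder:
  fixes U V :: "real mat"
  assumes U: "U \<in> carrier_mat m d" and V: "V \<in> carrier_mat n d"
    and q1: "q1 \<ge> 2" and q2: "q2 > 0" and p: "p > 0" and pq: "1/q1 + 1/q2 = 1/p" and p2: "p \<le> 2"
  shows "schatten p (U * transpose_mat V) \<le> schatten q1 U * schatten q2 V"
proof -
  define X where "X = U * transpose_mat V"
  have Xc: "X \<in> carrier_mat m n" using U V by (simp add: X_def)
  obtain H lam where H: "orth d H" and UU: "transpose_mat U * U = H * dg d lam * transpose_mat H"
    and lam: "\<forall>i<d. lam i \<ge> 0" using gram_spectral[OF U] by blast
  obtain G tau where G: "orth d G" and VV: "transpose_mat V * V = G * dg d tau * transpose_mat G"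
    and tau: "\<forall>i<d. tau i \<ge> 0" using gram_spectral[OF V] by blast
  obtain C mu where C: "orth n C" and XX: "transpose_mat X * X = C * dg n mu * transpose_mat C"
    and mu: "\<forall>i<n. mu i \<ge> 0" using gram_spectral[OF Xc] by blast
  have Gc: "G \<in> carrier_mat d d" using G by (simp add: orth_def)
  define K where "K = {k. k < d \<and> tau k > 0}"
  have Kfin: "finite K" unfolding K_def by simp
  define e where "e k = (1 / sqrt (tau k)) \<cdot>\<^sub>v (V *\<^sub>v col G k)" for k
  define N where "N k = (U *\<^sub>v col G k) \<bullet> (U *\<^sub>v col G k)" for k
  have N0: "\<And>k. N k \<ge> 0" unfolding N_def by (rule sprod_self_ge0)
  have ec: "\<And>k. k \<in> K \<Longrightarrow> e k \<in> carrier_vec n" using V Gc by (auto simp: e_def K_def)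
  have VVg: "\<And>k. k < d \<Longrightarrow> (transpose_mat V * V) *\<^sub>v col G k = tau k \<cdot>\<^sub>v col G k"
    using spec_eigvec[OF G VV] by blast
  have VgVg: "\<And>k. k < d \<Longrightarrow> (V *\<^sub>v col G k) \<bullet> (V *\<^sub>v col G k) = tau k"
  proof -
    fix k assume k: "k < d"
    have gk: "col G k \<in> carrier_vec d" using Gc k by simp
    have "(V *\<^sub>v col G k) \<bullet> (V *\<^sub>v col G k) = col G k \<bullet> ((transpose_mat V * V) *\<^sub>v col G k)"
      using sprod_transpose[of "transpose_mat V" d n "col G k" "V *\<^sub>v col G k"] V gk by simp
    also have "\<dots> = tau k" unfolding VVg[OF k] using gk orth_cols[OF G k k] by simp
    finally show "(V *\<^sub>v col G k) \<bullet> (V *\<^sub>v col G k) = tau k" .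
  qed
  have e1: "\<And>k. k \<in> K \<Longrightarrow> e k \<bullet> e k = 1"
  proof -
    fix k assume k: "k \<in> K"
    hence kd: "k < d" and tk: "tau k > 0" by (auto simp: K_def)
    have gk: "col G k \<in> carrier_vec d" using Gc kd by simp
    have "e k \<bullet> e k = (1 / sqrt (tau k)) * (1 / sqrt (tau k)) * tau k"
      unfolding e_def using V gk VgVg[OF kd] by simp
    thus "e k \<bullet> e k = 1" using tk by (simp add: field_simps)
  qed
  have Xe: "\<And>k. k \<in> K \<Longrightarrow> (X *\<^sub>v e k) \<bullet> (X *\<^sub>v e k) = tau k * N k"
  proof -
    fix k assume k: "k \<in> K"
    hence kd: "k < d" and tk: "tau k > 0" by (auto simp: K_def)
    have gk: "col G k \<in> carrier_vec d" using Gc kd by simp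
    have "X *\<^sub>v (V *\<^sub>v col G k) = U *\<^sub>v ((transpose_mat V * V) *\<^sub>v col G k)"
      unfolding X_def using U V gk by simp
    also have "\<dots> = tau k \<cdot>\<^sub>v (U *\<^sub>v col G k)" unfolding VVg[OF kd] using U gk mult_mat_vec by blast
    finally have "X *\<^sub>v e k = ((1 / sqrt (tau k)) * tau k) \<cdot>\<^sub>v (U *\<^sub>v col G k)"
      unfolding e_def using Xc V gk mult_mat_vec[of X m n] by (simp add: smult_smult_assoc)
    hence "(X *\<^sub>v e k) \<bullet> (X *\<^sub>v e k) = ((1 / sqrt (tau k)) * tau k) * ((1 / sqrt (tau k)) * tau k) * N k"
      unfolding N_def using U gk by simp
    also have "(1 / sqrt (tau k)) * tau k * ((1 / sqrt (tau k)) * tau k) = tau k"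
      using tk by (simp add: field_simps)
    finally show "(X *\<^sub>v e k) \<bullet> (X *\<^sub>v e k) = tau k * N k" .
  qed
  have cov: "\<And>i. i < n \<Longrightarrow> mu i > 0 \<Longrightarrow> (\<Sum>k\<in>K. (col C i \<bullet> e k)^2) = 1"
    unfolding K_def e_def by (rule L_cov[OF U V G VV tau C XX[unfolded X_def]])
  define s where "s = p / 2"
  have s0: "s > 0" and s1: "s \<le> 1" using p p2 by (auto simp: s_def)
  have step1: "(\<Sum>i<n. mu i powr s) \<le> (\<Sum>k\<in>K. (tau k * N k) powr s)"
    using LX[OF Xc C XX mu Kfin ec e1 cov s0 s1] by (simp add: Xe)
  define P where "P = q2 / p"
  define Q where "Q = q1 / p"
  have q1p: "q1 > 0" using q1 by simp
  have iP: "1 / P = p / q2" and iQ: "1 / Q = p / q1" by (simp_all add: P_def Q_def)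
  have PQ: "1 / P + 1 / Q = 1" unfolding iP iQ using pq p q1p q2 by (simp add: field_simps) (smt (verit) mult_pos_pos)
  have P1: "P > 1" and Q1: "Q > 1"
  proof -
    have "p / q2 > 0" "p / q1 > 0" using p q1p q2 by auto
    hence "1 / P < 1" "1 / Q < 1" using PQ iP iQ by linarith+
    moreover have "P > 0" "Q > 0" using p q1p q2 by (auto simp: P_def Q_def)
    ultimately show "P > 1" "Q > 1" by (auto simp: field_simps)
  qed
  have "(\<Sum>k\<in>K. (tau k * N k) powr s) = (\<Sum>k\<in>K. tau k powr s * N k powr s)"
    using tau N0 by (intro sum.cong refl) (auto simp: K_def powr_mult)
  also have "\<dots> \<le> (\<Sum>k\<in>K. (tau k powr s) powr P) powr (1/P) * (\<Sum>k\<in>K. (N k powr s) powr Q) powr (1/Q)"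
    by (rule holder_sum) (use Kfin P1 Q1 PQ in auto)
  also have "(\<Sum>k\<in>K. (tau k powr s) powr P) = (\<Sum>k\<in>K. sqrt (tau k) powr q2)"
    using tau p by (intro sum.cong refl) (auto simp: K_def powr_powr sqrt_powr s_def P_def)
  also have "(\<Sum>k\<in>K. (N k powr s) powr Q) = (\<Sum>k\<in>K. N k powr (q1 / 2))"
    using p by (intro sum.cong refl) (auto simp: powr_powr s_def Q_def)
  finally have step2: "(\<Sum>k\<in>K. (tau k * N k) powr s) \<le> (\<Sum>k\<in>K. sqrt (tau k) powr q2) powr (1/P) * (\<Sum>k\<in>K. N k powr (q1 / 2)) powr (1/Q)" .
  define SV where "SV = (\<Sum>k<d. sqrt (tau k) powr q2)"
  define SU where "SU = (\<Sum>i<d. sqrt (lam i) powr q1)"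
  have SV0: "SV \<ge> 0" unfolding SV_def by (intro sum_nonneg) auto
  have SU0: "SU \<ge> 0" unfolding SU_def by (intro sum_nonneg) auto
  have A1: "(\<Sum>k\<in>K. sqrt (tau k) powr q2) \<le> SV"
    unfolding SV_def K_def by (rule sum_mono2) auto
  have A2: "(\<Sum>k\<in>K. N k powr (q1 / 2)) \<le> SU"
  proof -
    have "(\<Sum>k\<in>K. N k powr (q1 / 2)) \<le> (\<Sum>k<d. N k powr (q1 / 2))"
      unfolding K_def by (rule sum_mono2) auto
    also have "\<dots> \<le> (\<Sum>i<d. lam i powr (q1 / 2))"
      unfolding N_def by (rule LU[OF U G H UU lam]) (use q1 in auto)
    also have "\<dots> = SU" unfolding SU_def using lam by (intro sum.cong refl) (simp add: sqrt_powr)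
    finally show ?thesis .
  qed
  have A1': "(\<Sum>k\<in>K. sqrt (tau k) powr q2) powr (1/P) \<le> SV powr (1/P)"
    by (rule powr_mono2) (use A1 P1 in \<open>auto intro: sum_nonneg\<close>)
  have A2': "(\<Sum>k\<in>K. N k powr (q1 / 2)) powr (1/Q) \<le> SU powr (1/Q)"
    by (rule powr_mono2) (use A2 Q1 N0 in \<open>auto intro: sum_nonneg\<close>)
  have main: "(\<Sum>i<n. mu i powr s) \<le> SV powr (1/P) * SU powr (1/Q)"
    using step1 step2 mult_mono[OF A1' A2'] by (smt (verit) powr_ge_zero)
  have SX: "schatten p X = (\<Sum>i<n. mu i powr s) powr (1/p)"
    unfolding schatten_spec[OF Xc C XX] using mu by (simp add: sqrt_powr s_def)
  have SUe: "schatten q1 U = SU powr (1/q1)" unfolding schatten_spec[OF U H UU] SU_def ..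
  have SVe: "schatten q2 V = SV powr (1/q2)" unfolding schatten_spec[OF V G VV] SV_def ..
  have "schatten p X \<le> (SV powr (1/P) * SU powr (1/Q)) powr (1/p)"
    unfolding SX by (rule powr_mono2) (use main p mu in \<open>auto intro: sum_nonneg\<close>)
  also have "\<dots> = SV powr (1/q2) * SU powr (1/q1)"
    using SV0 SU0 p q1p q2 by (simp add: powr_mult powr_powr iP iQ)
  finally show ?thesis unfolding X_def SUe SVe by (simp add: mult.commute)
qed



lemma idx3:
  assumes Q: "Q \<in> carrier_mat a k" and i: "i < a" and j: "j < a"
  shows "(Q * dg k f * transpose_mat Q) $$ (i,j) = (\<Sum>l<k. Q $$ (i,l) * f l * Q $$ (j,l))"
proof -
  have r: "row (Q * dg k f) i = vec k (\<lambda>l. Q $$ (i,l) * f l)"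
  proof (rule eq_vecI)
    fix l assume l: "l < dim_vec (vec k (\<lambda>l. Q $$ (i,l) * f l))"
    hence l: "l < k" by simp
    have "(Q * dg k f) $$ (i,l) = (\<Sum>t\<in>{0..<k}. Q $$ (i,t) * (if t = l then f t else 0))"
      using Q i l by (simp add: scalar_prod_def row_def col_def)
    also have "\<dots> = (\<Sum>t\<in>{0..<k}. if t = l then Q $$ (i,l) * f l else 0)" by (intro sum.cong) auto
    also have "\<dots> = Q $$ (i,l) * f l" using l by simp
    finally show "row (Q * dg k f) i $ l = vec k (\<lambda>l. Q $$ (i,l) * f l) $ l" using Q i l by simp
  qed (use Q in simp)
  have "(Q * dg k f * transpose_mat Q) $$ (i,j) = row (Q * dg k f) i \<bullet> col (transpose_mat Q) j"
    using Q i j by simp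
  also have "\<dots> = (\<Sum>l<k. Q $$ (i,l) * f l * Q $$ (j,l))"
    unfolding r using Q j by (simp add: scalar_prod_def col_def atLeast0LessThan)
  finally show ?thesis .
qed

lemma orth_one: "orth d (1\<^sub>m d)" by (simp add: orth_def)

lemma factor:
  fixes U :: "real mat"
  assumes U: "U \<in> carrier_mat m d" and g0: "0 < \<gamma>" and g1: "\<gamma> < 1"
  shows "\<exists>U' W lam. U' \<in> carrier_mat m d \<and> W \<in> carrier_mat d d \<and> U = U' * W \<and> (\<forall>i<d. lam i \<ge> 0) \<and>
     (\<forall>q. schatten q U = (\<Sum>i<d. lam i powr (q/2)) powr (1/q)) \<and>
     (\<forall>q. schatten q U' = (\<Sum>i<d. lam i powr (\<gamma>*q/2)) powr (1/q)) \<and>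
     (\<forall>q. schatten q W = (\<Sum>i<d. lam i powr ((1-\<gamma>)*q/2)) powr (1/q))"
proof -
  obtain H lam where H: "orth d H" and UU: "transpose_mat U * U = H * dg d lam * transpose_mat H"
    and lam: "\<forall>i<d. lam i \<ge> 0" using gram_spectral[OF U] by blast
  have Hc: "H \<in> carrier_mat d d" using H by (simp add: orth_def)
  define hv where "hv j = U *\<^sub>v col H j" for j
  have hvc: "\<And>j. hv j \<in> carrier_vec m"
    unfolding hv_def by (rule mult_mat_vec_carrier[OF U]) (metis Hc carrier_matD(1) col_def vec_carrier)
  have hvn: "\<And>i j. i < d \<Longrightarrow> j < d \<Longrightarrow> hv i \<bullet> hv j = (if i = j then lam j else 0)"
  proof -
    fix i j assume i: "i < d" and j: "j < d"
    have hi: "col H i \<in> carrier_vec d" and hj: "col H j \<in> carrier_vec d" using Hc i j by auto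
    have "hv i \<bullet> hv j = col H i \<bullet> ((transpose_mat U * U) *\<^sub>v col H j)"
      using sprod_transpose[of "transpose_mat U" d m "col H i" "U *\<^sub>v col H j"] U hi hj by (simp add: hv_def)
    also have "\<dots> = lam j * (col H i \<bullet> col H j)" unfolding spec_eigvec[OF H UU j] using hi hj by simp
    finally show "hv i \<bullet> hv j = (if i = j then lam j else 0)" using orth_cols[OF H i j] by simp
  qed
  have hv0: "\<And>j. j < d \<Longrightarrow> lam j = 0 \<Longrightarrow> hv j = 0\<^sub>v m"
    using hvn sprod_self_0 hvc by (metis carrier_vecD)
  define Dv where "Dv j = (if lam j > 0 then lam j powr ((\<gamma> - 1)/2) else 0)" for j
  define Ev where "Ev j = lam j powr ((1 - \<gamma>)/2)" for j
  define U' where "U' = mat m d (\<lambda>(a,j). Dv j * hv j $ a)"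
  define W where "W = mat d d (\<lambda>(i,j). Ev i * H $$ (j,i))"
  have U'c: "U' \<in> carrier_mat m d" and Wc: "W \<in> carrier_mat d d" by (auto simp: U'_def W_def)
  have colU': "\<And>j. j < d \<Longrightarrow> col U' j = Dv j \<cdot>\<^sub>v hv j"
  proof -
    fix j assume j: "j < d"
    have c: "hv j \<in> carrier_vec m" by (rule hvc)
    show "col U' j = Dv j \<cdot>\<^sub>v hv j" by (rule eq_vecI) (use c j in \<open>auto simp: U'_def\<close>)
  qed
  have DDl: "\<And>j. j < d \<Longrightarrow> Dv j * Dv j * lam j = lam j powr \<gamma>"
  proof -
    fix j assume j: "j < d"
    show "Dv j * Dv j * lam j = lam j powr \<gamma>"
    proof (cases "lam j > 0")
      case True
      have e: "lam j powr ((\<gamma> - 1)/2 + (\<gamma> - 1)/2 + 1) = lam j powr ((\<gamma> - 1)/2) * lam j powr ((\<gamma> - 1)/2) * lam j powr 1"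
        by (simp only: powr_add)
      have "(\<gamma> - 1)/2 + (\<gamma> - 1)/2 + 1 = \<gamma>" by simp
      thus ?thesis using e True by (simp add: Dv_def)
    next
      case False hence "lam j = 0" using lam j by force
      thus ?thesis by (simp add: Dv_def)
    qed
  qed
  have G1: "transpose_mat U' * U' = 1\<^sub>m d * dg d (\<lambda>j. lam j powr \<gamma>) * transpose_mat (1\<^sub>m d)"
  proof (rule eq_matI)
    fix i j assume i: "i < dim_row (1\<^sub>m d * dg d (\<lambda>j. lam j powr \<gamma>) * transpose_mat (1\<^sub>m d))"
      and j: "j < dim_col (1\<^sub>m d * dg d (\<lambda>j. lam j powr \<gamma>) * transpose_mat (1\<^sub>m d))"
    hence i: "i < d" and j: "j < d" by auto
    have "(transpose_mat U' * U') $$ (i,j) = col U' i \<bullet> col U' j" using U'c i j by simp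
    also have "\<dots> = Dv i * Dv j * (hv i \<bullet> hv j)" unfolding colU'[OF i] colU'[OF j] using hvc[of i] hvc[of j] by simp
    also have "\<dots> = (if i = j then lam j powr \<gamma> else 0)" using hvn[OF i j] DDl[OF j] by simp
    finally show "(transpose_mat U' * U') $$ (i,j) = (1\<^sub>m d * dg d (\<lambda>j. lam j powr \<gamma>) * transpose_mat (1\<^sub>m d)) $$ (i,j)"
      using i j by simp
  qed (use U'c in auto)
  have G2: "transpose_mat W * W = H * dg d (\<lambda>j. lam j powr (1 - \<gamma>)) * transpose_mat H"
  proof (rule eq_matI)
    fix i j assume i: "i < dim_row (H * dg d (\<lambda>j. lam j powr (1 - \<gamma>)) * transpose_mat H)"
      and j: "j < dim_col (H * dg d (\<lambda>j. lam j powr (1 - \<gamma>)) * transpose_mat H)"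
    hence i: "i < d" and j: "j < d" using Hc by auto
    have "(transpose_mat W * W) $$ (i,j) = (\<Sum>l<d. W $$ (l,i) * W $$ (l,j))"
      using Wc i j by (simp add: scalar_prod_def col_def row_def atLeast0LessThan)
    also have "\<dots> = (\<Sum>l<d. H $$ (i,l) * lam l powr (1 - \<gamma>) * H $$ (j,l))"
    proof (intro sum.cong refl)
      fix l assume l: "l \<in> {..<d}"
      have e: "lam l powr ((1 - \<gamma>)/2 + (1 - \<gamma>)/2) = lam l powr ((1 - \<gamma>)/2) * lam l powr ((1 - \<gamma>)/2)"
        by (simp only: powr_add)
      have "(1 - \<gamma>)/2 + (1 - \<gamma>)/2 = 1 - \<gamma>" by simp
      hence "Ev l * Ev l = lam l powr (1 - \<gamma>)" using e by (simp add: Ev_def)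
      thus "W $$ (l,i) * W $$ (l,j) = H $$ (i,l) * lam l powr (1 - \<gamma>) * H $$ (j,l)"
        using i j l by (simp add: W_def)
    qed
    also have "\<dots> = (H * dg d (\<lambda>j. lam j powr (1 - \<gamma>)) * transpose_mat H) $$ (i,j)"
      using idx3[OF Hc i j] by simp
    finally show "(transpose_mat W * W) $$ (i,j) = (H * dg d (\<lambda>j. lam j powr (1 - \<gamma>)) * transpose_mat H) $$ (i,j)" .
  qed (use Hc Wc in auto)
  have HHT: "\<And>b j. b < d \<Longrightarrow> j < d \<Longrightarrow> (\<Sum>l<d. H $$ (b,l) * H $$ (j,l)) = (if b = j then 1 else 0)"
  proof -
    fix b j assume b: "b < d" and j: "j < d"
    have "(H * transpose_mat H) $$ (b,j) = (\<Sum>l<d. H $$ (b,l) * H $$ (j,l))"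
      using Hc b j by (simp add: scalar_prod_def row_def col_def atLeast0LessThan)
    thus "(\<Sum>l<d. H $$ (b,l) * H $$ (j,l)) = (if b = j then 1 else 0)"
      using orth_right[OF H] b j by simp
  qed
  have UW: "U = U' * W"
  proof (rule eq_matI)
    fix a j assume a: "a < dim_row (U' * W)" and j: "j < dim_col (U' * W)"
    hence a: "a < m" and j: "j < d" using U'c Wc by auto
    have "(U' * W) $$ (a,j) = (\<Sum>l<d. U' $$ (a,l) * W $$ (l,j))"
      using U'c Wc a j by (simp add: scalar_prod_def row_def col_def atLeast0LessThan)
    also have "\<dots> = (\<Sum>l<d. hv l $ a * H $$ (j,l))"
    proof (intro sum.cong refl)
      fix l assume l: "l \<in> {..<d}"
      show "U' $$ (a,l) * W $$ (l,j) = hv l $ a * H $$ (j,l)"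
      proof (cases "lam l > 0")
        case True
        have e: "lam l powr ((\<gamma> - 1)/2 + (1 - \<gamma>)/2) = lam l powr ((\<gamma> - 1)/2) * lam l powr ((1 - \<gamma>)/2)"
          by (simp only: powr_add)
        have "(\<gamma> - 1)/2 + (1 - \<gamma>)/2 = 0" by (simp add: field_simps)
        hence "Dv l * Ev l = 1" using e True by (simp add: Dv_def Ev_def)
        thus ?thesis using a j l by (simp add: U'_def W_def)
      next
        case False hence "lam l = 0" using lam l by force
        hence "hv l = 0\<^sub>v m" using hv0 l by simp
        thus ?thesis using a j l by (simp add: U'_def W_def)
      qed
    qed
    also have "\<dots> = (\<Sum>l<d. \<Sum>b<d. U $$ (a,b) * H $$ (b,l) * H $$ (j,l))"
      using U Hc a by (intro sum.cong refl) (simp add: hv_def scalar_prod_def row_def col_def atLeast0LessThan sum_distrib_right)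
    also have "\<dots> = (\<Sum>b<d. U $$ (a,b) * (\<Sum>l<d. H $$ (b,l) * H $$ (j,l)))"
      by (subst sum.swap) (simp add: sum_distrib_left mult.assoc)
    also have "\<dots> = (\<Sum>b<d. if b = j then U $$ (a,b) else 0)" using j by (intro sum.cong refl) (simp add: HHT)
    also have "\<dots> = U $$ (a,j)" using j by simp
    finally show "U $$ (a,j) = (U' * W) $$ (a,j)" by simp
  qed (use U U'c Wc in auto)
  have s1: "\<forall>q. schatten q U = (\<Sum>i<d. lam i powr (q/2)) powr (1/q)"
    using schatten_spec[OF U H UU] lam by (simp add: sqrt_powr)
  have s2: "\<forall>q. schatten q U' = (\<Sum>i<d. lam i powr (\<gamma>*q/2)) powr (1/q)"
    using schatten_spec[OF U'c orth_one G1] lam by (simp add: sqrt_powr powr_powr)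
  have s3: "\<forall>q. schatten q W = (\<Sum>i<d. lam i powr ((1-\<gamma>)*q/2)) powr (1/q)"
    using schatten_spec[OF Wc H G2] lam by (simp add: sqrt_powr powr_powr)
  show ?thesis using U'c Wc UW lam s1 s2 s3 by blast
qed



lemma schatten_nonneg: "schatten q Y \<ge> 0"
  by (simp add: schatten_def)

lemma holder_rec:
  fixes U V :: "real mat"
  shows "U \<in> carrier_mat m d \<Longrightarrow> V \<in> carrier_mat n d \<Longrightarrow> p1 > 0 \<Longrightarrow> p2 > 0 \<Longrightarrow> p > 0 \<Longrightarrow>
    1/p1 + 1/p2 = 1/p \<Longrightarrow> p \<le> 2 \<Longrightarrow> 2/p \<le> real N \<Longrightarrow>
    schatten p (U * transpose_mat V) \<le> schatten p1 U * schatten p2 V"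
proof (induction N arbitrary: p1 p2 p m n d U V)
  case 0
  hence "2 / p > 0" by simp
  thus ?case using 0 by simp
next
  case (Suc N)
  note U = Suc.prems(1) and V = Suc.prems(2) and p1 = Suc.prems(3) and p2 = Suc.prems(4)
    and p = Suc.prems(5) and pp = Suc.prems(6) and ple = Suc.prems(7) and pN = Suc.prems(8)
  show ?case
  proof (cases "p1 \<ge> 2")
    case True
    show ?thesis by (rule L_holder[OF U V True p2 p pp ple])
  next
    case False
    hence p1l: "p1 < 2" by simp
    have ip: "1/p > 1/2"
    proof -
      have "1/p1 > 1/2" using p1 p1l by (simp add: field_simps)
      moreover have "1/p2 > 0" using p2 by simp
      ultimately show ?thesis using pp by linarith
    qed
    define c where "c = min (1/2) (1/p - 1/2)"
    have c0: "c > 0" and c1: "c \<le> 1/2" and c2: "c \<le> 1/p - 1/2" using ip unfolding c_def by (auto simp: min_def)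
    define \<gamma> where "\<gamma> = p1 * c"
    have g0: "\<gamma> > 0" using p1 c0 by (simp add: \<gamma>_def)
    have g1: "\<gamma> < 1"
    proof -
      have "p1 * c \<le> p1 * (1/2)" using c1 p1 by (intro mult_left_mono) auto
      thus ?thesis using p1l by (simp add: \<gamma>_def)
    qed
    obtain U' W lam where U': "U' \<in> carrier_mat m d" and W: "W \<in> carrier_mat d d" and UW: "U = U' * W"
      and lam: "\<forall>i<d. lam i \<ge> 0"
      and sU: "\<forall>q. schatten q U = (\<Sum>i<d. lam i powr (q/2)) powr (1/q)"
      and sU': "\<forall>q. schatten q U' = (\<Sum>i<d. lam i powr (\<gamma>*q/2)) powr (1/q)"
      and sW: "\<forall>q. schatten q W = (\<Sum>i<d. lam i powr ((1-\<gamma>)*q/2)) powr (1/q)"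
      using factor[OF U g0 g1] by blast
    define q1 where "q1 = 1 / c"
    define q2 where "q2 = 1 / (1/p - c)"
    define r where "r = p1 / (1 - \<gamma>)"
    have q1: "q1 \<ge> 2" using c0 c1 by (simp add: q1_def field_simps)
    have iq2: "1/q2 = 1/p - c" by (simp add: q2_def)
    have q2p: "q2 > 0" using c2 by (simp add: q2_def)
    have h: "1/2 \<le> 1/q2" using c2 iq2 by linarith
    have q2l: "q2 \<le> 2" using h q2p by (simp add: field_simps)
    have r0: "r > 0" using p1 g1 by (simp add: r_def)
    define Y where "Y = V * transpose_mat W"
    have Y: "Y \<in> carrier_mat n d" using V W by (simp add: Y_def)
    have XY: "U * transpose_mat V = U' * transpose_mat Y"
    proof -
      have "transpose_mat Y = W * transpose_mat V"
        unfolding Y_def using transpose_mult[of V n d "transpose_mat W" d] V W by simp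
      thus ?thesis unfolding UW using U' W V by (simp add: assoc_mult_mat[of _ m d _ d _ n])
    qed
    have step1: "schatten p (U * transpose_mat V) \<le> schatten q1 U' * schatten q2 Y"
      unfolding XY by (rule L_holder[OF U' Y q1 q2p p]) (use iq2 q1_def p ple in auto)
    have ir: "1/r = 1/p1 - c" using p1 by (simp add: r_def \<gamma>_def field_simps)
    have step2: "schatten q2 Y \<le> schatten p2 V * schatten r W"
      unfolding Y_def
    proof (rule Suc.IH[OF V W p2 r0 q2p _ q2l])
      show "1/p2 + 1/r = 1/q2" using ir iq2 pp by simp
      show "2/q2 \<le> real N"
      proof (cases "c = 1/2")
        case True
        thus ?thesis using iq2 pN by (simp add: field_simps) 
      next
        case False
        hence "c = 1/p - 1/2" unfolding c_def by (auto simp: min_def split: if_splits)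
        hence h2: "1/q2 = 1/2" using iq2 by linarith
        have "2/q2 = 2 * (1/q2)" by simp
        hence "2/q2 = 1" using h2 by simp
        moreover have "real (Suc N) > 1" using pN ip by (simp add: field_simps) 
        ultimately show ?thesis by simp
      qed
    qed
    define A where "A = (\<Sum>i<d. lam i powr (p1/2))"
    have A0: "A \<ge> 0" unfolding A_def by (intro sum_nonneg) auto
    have e1: "schatten q1 U' = A powr c"
    proof -
      have "\<gamma> * q1 / 2 = p1 / 2" using c0 by (simp add: \<gamma>_def q1_def)
      thus ?thesis using sU' by (simp add: A_def q1_def)
    qed
    have e2: "schatten r W = A powr (1/p1 - c)"
    proof -
      have "(1 - \<gamma>) * r / 2 = p1 / 2" using g1 by (simp add: r_def)
      thus ?thesis using sW ir by (simp add: A_def)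
    qed
    have e3: "schatten p1 U = A powr (1/p1)" using sU by (simp add: A_def)
    have "schatten p (U * transpose_mat V) \<le> schatten q1 U' * (schatten p2 V * schatten r W)"
      using step1 mult_left_mono[OF step2 schatten_nonneg[of q1 U']] by linarith
    also have "\<dots> = (A powr c * A powr (1/p1 - c)) * schatten p2 V" unfolding e1 e2 by simp
    also have "A powr c * A powr (1/p1 - c) = A powr (1/p1)" by (simp add: powr_add[symmetric])
    finally show ?thesis unfolding e3 .
  qed
qed



context vec_space
begin

lemma orth_lin_indpt:
  assumes W: "W \<subseteq> carrier_vec n"
    and orth: "\<And>v w. v \<in> W \<Longrightarrow> w \<in> W \<Longrightarrow> v \<noteq> w \<Longrightarrow> v \<bullet> w = 0"
    and nz: "\<And>v. v \<in> W \<Longrightarrow> v \<bullet> v \<noteq> 0"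
  shows "lin_indpt W"
proof
  assume "lin_dep W"
  then obtain A a v where A: "finite A" "A \<subseteq> W" and lc: "lincomb a A = 0\<^sub>v n" and v: "v \<in> A" and av: "a v \<noteq> 0"
    unfolding lin_dep_def by auto
  have Ac: "A \<subseteq> carrier_vec n" using A W by auto
  have vc: "v \<in> carrier_vec n" using v Ac by auto
  have d: "dim_vec (lincomb a A) = n" using lc by simp
  have "v \<bullet> lincomb a A = (\<Sum>i\<in>{0..<n}. v$i * (\<Sum>x\<in>A. a x * x$i))"
    unfolding scalar_prod_def d by (intro sum.cong refl) (simp add: lincomb_index[OF _ Ac])
  also have "\<dots> = (\<Sum>x\<in>A. a x * (\<Sum>i\<in>{0..<n}. v$i * x$i))"
    by (simp add: sum_distrib_left sum_distrib_right mult_ac) (rule sum.swap)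
  also have "\<dots> = (\<Sum>x\<in>A. a x * (v \<bullet> x))"
    using Ac by (intro sum.cong refl) (auto simp: scalar_prod_def)
  also have "\<dots> = (\<Sum>x\<in>A. if x = v then a v * (v \<bullet> v) else 0)"
    using A orth v by (intro sum.cong refl) auto
  also have "\<dots> = a v * (v \<bullet> v)" using A v by simp
  finally have "a v * (v \<bullet> v) = 0" using lc vc by simp
  thus False using av nz[of v] v A by auto
qed

lemma card_le_rank:
  assumes A: "A \<in> carrier_mat n nc" and Wsub: "W \<subseteq> span (set (cols A))" and li: "lin_indpt W"
  shows "card W \<le> rank A"
proof -
  let ?S = "set (cols A)"
  have Sc: "?S \<subseteq> carrier_vec n" using cols_dim A by blast
  have vs: "vectorspace class_ring (span_vs ?S)"
    using field.field_axioms vectorspace_def submodule_is_module[OF span_is_submodule[OF Sc]] by metis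
  have fd: "vectorspace.fin_dim class_ring (span_vs ?S)" using fin_dim_span_cols[OF A] .
  have li': "LinearCombinations.module.lin_indpt class_ring (span_vs ?S) W"
    using span_li_not_depend(2)[OF Wsub span_is_submodule[OF Sc]] li by simp
  have Wc: "W \<subseteq> carrier (span_vs ?S)" using Wsub by simp
  show ?thesis using vectorspace.li_le_dim(2)[OF vs fd Wc li'] unfolding rank_def .
qed

lemma mult_in_colspan:
  assumes A: "A \<in> carrier_mat n nc" and x: "x \<in> carrier_vec nc"
  shows "A *\<^sub>v x \<in> span (set (cols A))"
  using col_space_eq[OF A] A x unfolding col_space_def by auto

end


lemma sum_nth_distinct:
  assumes "distinct xs"
  shows "(\<Sum>j<length xs. g (xs ! j)) = (\<Sum>i\<in>set xs. g i)"
proof -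
  have "(\<Sum>j<length xs. g (xs ! j)) = sum_list (map g xs)"
    by (simp add: sum_list_sum_nth atLeast0LessThan)
  also have "\<dots> = (\<Sum>i\<in>set xs. g i)" using assms by (simp add: sum_list_distinct_conv_sum_set)
  finally show ?thesis .
qed

lemma attain:
  fixes X :: "real mat"
  assumes X: "X \<in> carrier_mat m n" and rk: "vec_space.rank m X \<le> d"
    and p: "p > 0" and p1: "p1 > 0" and p2: "p2 > 0" and pp: "1/p1 + 1/p2 = 1/p"
  shows "\<exists>U V. U \<in> carrier_mat m d \<and> V \<in> carrier_mat n d \<and> X = U * transpose_mat V \<and>
            schatten p X = schatten p1 U * schatten p2 V"
proof -
  interpret vs: vec_space "TYPE(real)" m .
  obtain C mu where C: "orth n C" and XX: "transpose_mat X * X = C * dg n mu * transpose_mat C"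
    and mu: "\<forall>i<n. mu i \<ge> 0" using gram_spectral[OF X] by blast
  have Cc: "C \<in> carrier_mat n n" using C by (simp add: orth_def)
  define xc where "xc i = X *\<^sub>v col C i" for i
  have xcc: "\<And>i. xc i \<in> carrier_vec m"
    unfolding xc_def by (rule mult_mat_vec_carrier[OF X]) (metis Cc carrier_matD(1) col_def vec_carrier)
  have xdot: "\<And>i j. i < n \<Longrightarrow> j < n \<Longrightarrow> xc i \<bullet> xc j = (if i = j then mu j else 0)"
  proof -
    fix i j assume i: "i < n" and j: "j < n"
    have ci: "col C i \<in> carrier_vec n" and cj: "col C j \<in> carrier_vec n" using Cc i j by auto
    have "xc i \<bullet> xc j = col C i \<bullet> ((transpose_mat X * X) *\<^sub>v col C j)"
      using sprod_transpose[of "transpose_mat X" n m "col C i" "X *\<^sub>v col C j"] X ci cj by (simp add: xc_def)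
    also have "\<dots> = mu j * (col C i \<bullet> col C j)" unfolding spec_eigvec[OF C XX j] using ci cj by simp
    finally show "xc i \<bullet> xc j = (if i = j then mu j else 0)" using orth_cols[OF C i j] by simp
  qed
  have xc0: "\<And>i. i < n \<Longrightarrow> mu i = 0 \<Longrightarrow> xc i = 0\<^sub>v m"
    using xdot sprod_self_0 xcc by (metis carrier_vecD)
  define I where "I = {i. i < n \<and> mu i > 0}"
  have Ifin: "finite I" by (simp add: I_def)
  have injI: "inj_on xc I"
  proof (rule inj_onI)
    fix i j assume i: "i \<in> I" and j: "j \<in> I" and e: "xc i = xc j"
    show "i = j"
    proof (rule ccontr)
      assume "i \<noteq> j"
      hence "xc i \<bullet> xc j = 0" using xdot i j by (simp add: I_def)
      moreover have "xc i \<bullet> xc i > 0" using xdot i by (simp add: I_def)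
      ultimately show False using e by simp
    qed
  qed
  have cardI: "card I \<le> d"
  proof -
    have li: "vs.lin_indpt (xc ` I)"
    proof (rule vs.orth_lin_indpt)
      show "xc ` I \<subseteq> carrier_vec m" using xcc by auto
      show "\<And>v w. v \<in> xc ` I \<Longrightarrow> w \<in> xc ` I \<Longrightarrow> v \<noteq> w \<Longrightarrow> v \<bullet> w = 0"
        using xdot by (auto simp: I_def)
      show "\<And>v. v \<in> xc ` I \<Longrightarrow> v \<bullet> v \<noteq> 0" using xdot by (auto simp: I_def)
    qed
    have sub: "xc ` I \<subseteq> vs.span (set (cols X))"
      using vs.mult_in_colspan[OF X] Cc by (auto simp: xc_def I_def)
    have "card (xc ` I) \<le> vs.rank X" by (rule vs.card_le_rank[OF X sub li])
    thus ?thesis using card_image[OF injI] rk by simp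
  qed
  define idx where "idx = sorted_list_of_set I"
  define k where "k = length idx"
  have dist: "distinct idx" and setidx: "set idx = I" using Ifin by (auto simp: idx_def)
  have kI: "k = card I" using dist setidx by (metis distinct_card k_def)
  have kd: "k \<le> d" using cardI kI by simp
  have idxI: "\<And>j. j < k \<Longrightarrow> idx ! j \<in> I" using setidx k_def nth_mem by blast
  define s where "s i = mu i powr (p / (2 * p1) - 1/2)" for i
  define t where "t i = mu i powr (p / (2 * p2))" for i
  define U where "U = mat m d (\<lambda>(a,j). if j < k then s (idx ! j) * xc (idx ! j) $ a else 0)"
  define V where "V = mat n d (\<lambda>(b,j). if j < k then t (idx ! j) * C $$ (b, idx ! j) else 0)"
  have Uc: "U \<in> carrier_mat m d" and Vc: "V \<in> carrier_mat n d" by (auto simp: U_def V_def)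
  have st: "\<And>i. i \<in> I \<Longrightarrow> s i * t i = 1"
  proof -
    fix i assume i: "i \<in> I"
    hence mp: "mu i > 0" by (simp add: I_def)
    have e: "mu i powr ((p / (2 * p1) - 1/2) + p / (2 * p2)) = s i * t i"
      unfolding s_def t_def by (simp only: powr_add)
    have "(p / (2 * p1) - 1/2) + p / (2 * p2) = p / 2 * (1/p1 + 1/p2) - 1/2" by (simp add: field_simps)
    also have "\<dots> = 0" using pp p by simp
    finally show "s i * t i = 1" using e mp by simp
  qed
  have CCT: "\<And>b l. b < n \<Longrightarrow> l < n \<Longrightarrow> (\<Sum>i<n. C $$ (l,i) * C $$ (b,i)) = (if l = b then 1 else 0)"
  proof -
    fix b l assume b: "b < n" and l: "l < n"
    have "(C * transpose_mat C) $$ (l,b) = (\<Sum>i<n. C $$ (l,i) * C $$ (b,i))"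
      using Cc b l by (simp add: scalar_prod_def row_def col_def atLeast0LessThan)
    thus "(\<Sum>i<n. C $$ (l,i) * C $$ (b,i)) = (if l = b then 1 else 0)"
      using orth_right[OF C] b l by simp
  qed
  have XUV: "X = U * transpose_mat V"
  proof (rule eq_matI)
    fix a b assume a: "a < dim_row (U * transpose_mat V)" and b: "b < dim_col (U * transpose_mat V)"
    hence a: "a < m" and b: "b < n" using Uc Vc by auto
    have "(U * transpose_mat V) $$ (a,b) = (\<Sum>j<d. U $$ (a,j) * V $$ (b,j))"
      using Uc Vc a b by (simp add: scalar_prod_def row_def col_def atLeast0LessThan)
    also have "\<dots> = (\<Sum>j<k. xc (idx ! j) $ a * C $$ (b, idx ! j))"
    proof -
      have "(\<Sum>j<d. U $$ (a,j) * V $$ (b,j)) = (\<Sum>j<k. U $$ (a,j) * V $$ (b,j))"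
        by (rule sum.mono_neutral_right) (use kd in \<open>auto simp: U_def V_def a b\<close>)
      also have "\<dots> = (\<Sum>j<k. xc (idx ! j) $ a * C $$ (b, idx ! j))"
      proof (intro sum.cong refl)
        fix j assume j: "j \<in> {..<k}"
        have "s (idx ! j) * t (idx ! j) = 1" using st idxI j by simp
        thus "U $$ (a,j) * V $$ (b,j) = xc (idx ! j) $ a * C $$ (b, idx ! j)"
          using j kd a b by (simp add: U_def V_def)
      qed
      finally show ?thesis .
    qed
    also have "\<dots> = (\<Sum>i\<in>I. xc i $ a * C $$ (b, i))"
      unfolding k_def by (rule sum_nth_distinct[OF dist, unfolded setidx])
    also have "\<dots> = (\<Sum>i<n. xc i $ a * C $$ (b, i))"
    proof (rule sum.mono_neutral_left)
      show "\<forall>i\<in>{..<n} - I. xc i $ a * C $$ (b, i) = 0"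
      proof
        fix i assume i: "i \<in> {..<n} - I"
        hence "mu i = 0" using mu by (force simp: I_def)
        thus "xc i $ a * C $$ (b, i) = 0" using xc0 i a by auto
      qed
    qed (auto simp: I_def)
    also have "\<dots> = (\<Sum>i<n. \<Sum>l<n. X $$ (a,l) * C $$ (l,i) * C $$ (b,i))"
      using X Cc a by (intro sum.cong refl) (simp add: xc_def scalar_prod_def row_def col_def atLeast0LessThan sum_distrib_right)
    also have "\<dots> = (\<Sum>l<n. X $$ (a,l) * (\<Sum>i<n. C $$ (l,i) * C $$ (b,i)))"
      by (subst sum.swap) (simp add: sum_distrib_left mult.assoc)
    also have "\<dots> = (\<Sum>l<n. if l = b then X $$ (a,l) else 0)" using b by (intro sum.cong refl) (simp add: CCT)
    also have "\<dots> = X $$ (a,b)" using b by simp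
    finally show "X $$ (a,b) = (U * transpose_mat V) $$ (a,b)" by simp
  qed (use X Uc Vc in auto)
  define fU where "fU j = (if j < k then mu (idx ! j) powr (p / p1) else 0)" for j
  define fV where "fV j = (if j < k then mu (idx ! j) powr (p / p2) else 0)" for j
  have colU: "\<And>j. j < d \<Longrightarrow> col U j = (if j < k then s (idx ! j) \<cdot>\<^sub>v xc (idx ! j) else 0\<^sub>v m)"
  proof -
    fix j assume j: "j < d"
    have c: "xc (idx ! j) \<in> carrier_vec m" by (rule xcc)
    show "col U j = (if j < k then s (idx ! j) \<cdot>\<^sub>v xc (idx ! j) else 0\<^sub>v m)"
      by (rule eq_vecI) (use c j in \<open>auto simp: U_def\<close>)
  qed
  have colV: "\<And>j. j < d \<Longrightarrow> col V j = (if j < k then t (idx ! j) \<cdot>\<^sub>v col C (idx ! j) else 0\<^sub>v n)"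
  proof -
    fix j assume j: "j < d"
    show "col V j = (if j < k then t (idx ! j) \<cdot>\<^sub>v col C (idx ! j) else 0\<^sub>v n)"
      by (rule eq_vecI) (use j Cc idxI in \<open>auto simp: V_def I_def\<close>)
  qed
  have idx_inj: "\<And>j l. j < k \<Longrightarrow> l < k \<Longrightarrow> idx ! j = idx ! l \<longleftrightarrow> j = l"
    using dist k_def nth_eq_iff_index_eq by blast
  have GU: "transpose_mat U * U = 1\<^sub>m d * dg d fU * transpose_mat (1\<^sub>m d)"
  proof (rule eq_matI)
    fix j l assume j: "j < dim_row (1\<^sub>m d * dg d fU * transpose_mat (1\<^sub>m d))"
      and l: "l < dim_col (1\<^sub>m d * dg d fU * transpose_mat (1\<^sub>m d))"
    hence j: "j < d" and l: "l < d" by auto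
    have "(transpose_mat U * U) $$ (j,l) = col U j \<bullet> col U l" using Uc j l by simp
    also have "\<dots> = (if j = l then fU j else 0)"
    proof (cases "j < k \<and> l < k")
      case True
      hence ij: "idx ! j \<in> I" and il: "idx ! l \<in> I" using idxI by auto
      have "col U j \<bullet> col U l = s (idx ! j) * s (idx ! l) * (xc (idx ! j) \<bullet> xc (idx ! l))"
        unfolding colU[OF j] colU[OF l] using True xcc[of "idx ! j"] xcc[of "idx ! l"] by simp
      also have "\<dots> = (if j = l then s (idx ! j) * s (idx ! j) * mu (idx ! j) else 0)"
        using xdot ij il idx_inj True by (auto simp: I_def)
      also have "s (idx ! j) * s (idx ! j) * mu (idx ! j) = mu (idx ! j) powr (p / p1)"
      proof -
        have mp: "mu (idx ! j) > 0" using ij by (simp add: I_def)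
        have e: "mu (idx ! j) powr ((p / (2 * p1) - 1/2) + (p / (2 * p1) - 1/2) + 1)
            = s (idx ! j) * s (idx ! j) * mu (idx ! j) powr 1"
          unfolding s_def by (simp only: powr_add)
        have "(p / (2 * p1) - 1/2) + (p / (2 * p1) - 1/2) + 1 = p / p1" by (simp add: field_simps)
        thus ?thesis using e mp by simp
      qed
      finally show ?thesis using True by (simp add: fU_def)
    next
      case False
      thus ?thesis unfolding colU[OF j] colU[OF l] using xcc by (auto simp: fU_def)
    qed
    finally show "(transpose_mat U * U) $$ (j,l) = (1\<^sub>m d * dg d fU * transpose_mat (1\<^sub>m d)) $$ (j,l)"
      using j l by simp
  qed (use Uc in auto)
  have GV: "transpose_mat V * V = 1\<^sub>m d * dg d fV * transpose_mat (1\<^sub>m d)"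
  proof (rule eq_matI)
    fix j l assume j: "j < dim_row (1\<^sub>m d * dg d fV * transpose_mat (1\<^sub>m d))"
      and l: "l < dim_col (1\<^sub>m d * dg d fV * transpose_mat (1\<^sub>m d))"
    hence j: "j < d" and l: "l < d" by auto
    have "(transpose_mat V * V) $$ (j,l) = col V j \<bullet> col V l" using Vc j l by simp
    also have "\<dots> = (if j = l then fV j else 0)"
    proof (cases "j < k \<and> l < k")
      case True
      hence ij: "idx ! j \<in> I" and il: "idx ! l \<in> I" using idxI by auto
      hence ijn: "idx ! j < n" and iln: "idx ! l < n" by (auto simp: I_def)
      have "col V j \<bullet> col V l = t (idx ! j) * t (idx ! l) * (col C (idx ! j) \<bullet> col C (idx ! l))"
        unfolding colV[OF j] colV[OF l] using True Cc ijn iln by simp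
      also have "\<dots> = (if j = l then t (idx ! j) * t (idx ! j) else 0)"
        using orth_cols[OF C ijn iln] idx_inj True by auto
      also have "t (idx ! j) * t (idx ! j) = mu (idx ! j) powr (p / p2)"
      proof -
        have e: "mu (idx ! j) powr (p / (2 * p2) + p / (2 * p2)) = t (idx ! j) * t (idx ! j)"
          unfolding t_def by (simp only: powr_add)
        have "p / (2 * p2) + p / (2 * p2) = p / p2" by (simp add: field_simps)
        thus ?thesis using e by simp
      qed
      finally show ?thesis using True by (simp add: fV_def)
    next
      case False
      thus ?thesis unfolding colV[OF j] colV[OF l] using Cc by (auto simp: fV_def)
    qed
    finally show "(transpose_mat V * V) $$ (j,l) = (1\<^sub>m d * dg d fV * transpose_mat (1\<^sub>m d)) $$ (j,l)"
      using j l by simp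
  qed (use Vc in auto)
  define B where "B = (\<Sum>i<n. mu i powr (p/2))"
  have B0: "B \<ge> 0" unfolding B_def by (intro sum_nonneg) auto
  have BI: "B = (\<Sum>i\<in>I. mu i powr (p/2))"
    unfolding B_def by (rule sum.mono_neutral_right) (use mu in \<open>auto simp: I_def\<close>)
  have sumf: "\<And>q e. (\<Sum>j<d. sqrt (if j < k then mu (idx ! j) powr e else 0) powr q) =
      (\<Sum>i\<in>I. mu i powr (e * q / 2))"
  proof -
    fix q e
    have "(\<Sum>j<d. sqrt (if j < k then mu (idx ! j) powr e else 0) powr q) =
        (\<Sum>j<k. sqrt (if j < k then mu (idx ! j) powr e else 0) powr q)"
      by (rule sum.mono_neutral_right) (use kd in auto)
    also have "\<dots> = (\<Sum>j<k. sqrt (mu (idx ! j) powr e) powr q)" by (intro sum.cong) auto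
    also have "\<dots> = (\<Sum>j<k. mu (idx ! j) powr (e * q / 2))"
      using idxI by (intro sum.cong refl) (auto simp: I_def sqrt_powr powr_powr)
    also have "\<dots> = (\<Sum>i\<in>I. mu i powr (e * q / 2))"
      unfolding k_def by (rule sum_nth_distinct[OF dist, unfolded setidx])
    finally show "(\<Sum>j<d. sqrt (if j < k then mu (idx ! j) powr e else 0) powr q) =
      (\<Sum>i\<in>I. mu i powr (e * q / 2))" .
  qed
  have SU: "schatten p1 U = B powr (1/p1)"
    unfolding schatten_spec[OF Uc orth_one GU] fU_def sumf BI using p1 by simp
  have SV: "schatten p2 V = B powr (1/p2)"
    unfolding schatten_spec[OF Vc orth_one GV] fV_def sumf BI using p2 by simp
  have SX: "schatten p X = B powr (1/p)"
    unfolding schatten_spec[OF X C XX] B_def using mu by (simp add: sqrt_powr)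
  have "schatten p X = schatten p1 U * schatten p2 V"
    unfolding SU SV SX by (simp add: powr_add[symmetric] pp)
  thus ?thesis using Uc Vc XUV by blast
qed


theorem theorem1:
  fixes X :: "real mat" and m n d r :: nat and p p1 p2 :: real
  assumes "X \<in> carrier_mat m n"
    and "vec_space.rank m X = r" and "r \<le> d"
    and "0 < p" and "p \<le> 1" and "0 < p1" and "0 < p2"
    and "1 / p1 + 1 / p2 = 1 / p"
  shows "(\<exists>U V. U \<in> carrier_mat m d \<and> V \<in> carrier_mat n d \<and> X = U * transpose_mat V \<and>
            schatten p X = schatten p1 U * schatten p2 V)
       \<and> (\<forall>U V. U \<in> carrier_mat m d \<longrightarrow> V \<in> carrier_mat n d \<longrightarrow> X = U * transpose_mat V \<longrightarrow>
            schatten p X \<le> schatten p1 U * schatten p2 V)"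
proof (intro conjI allI impI)
  show "\<exists>U V. U \<in> carrier_mat m d \<and> V \<in> carrier_mat n d \<and> X = U * transpose_mat V \<and>
            schatten p X = schatten p1 U * schatten p2 V"
    by (rule attain) (use assms in auto)
next
  fix U V assume U: "U \<in> carrier_mat m d" and V: "V \<in> carrier_mat n d" and XUV: "X = U * transpose_mat V"
  have N: "2 / p \<le> real (nat \<lceil>2 / p\<rceil>)" by linarith
  have "schatten p (U * transpose_mat V) \<le> schatten p1 U * schatten p2 V"
    by (rule holder_rec[OF U V _ _ _ _ _ N]) (use assms in auto)
  thus "schatten p X \<le> schatten p1 U * schatten p2 V" unfolding XUV .
qed

end
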